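(* Let $n\ge1$. For any integers $l,l'>0$ and any $(j',\Theta'),(j,\Theta)\in\Omega$ with $(j',\Theta')\prec(j,\Theta)$, $$\Theta(P_{j,l})\boxplus\Theta'(P_{j',l'})\sim\Theta(P_{j,l})$$ over $\mathcal T^{\otimes n}$. Consequently $\mathfrak P'(\mathcal T^{\otimes n})=\bigsqcup_{m\ge0}\mathfrak P'_m(\mathcal T^{\otimes n})$ is a graded submonoid of $\mathfrak P(\mathcal T^{\otimes n})$, whose monoid structure is determined by these relations together with $\Theta(P_{j,l})\boxplus\Theta(P_{j,l'})\sim\Theta(P_{j,l+l'})$.
   Context: $\mathcal T$ is the Toeplitz algebra on $\ell^2(\mathbb Z_{\ge0})$ generated by the unilateral shift $\mathcal S$, $I$ its unit, $\mathcal K$ the compacts, $\sigma:\mathcal T\to C(\mathbb T)$ the symbol map ($\sigma(\mathcal S)=z$, kernel $\mathcal K$); $P_1$ is the rank-one projection onto $\mathbb C e_0$. $\mathcal T^{\otimes n}$ is the spatial tensor product, with unit $\tilde I$, and $\sigma_n:=\sigma^{\otimes n}:\mathcal T^{\otimes n}\to C(\mathbb T^n)$. For a unital C*-algebra $A$, $M_\infty(A)=\bigcup_k M_k(A)$ (with $x\mapsto x\boxplus 0$), $GL_\infty(A)=\bigcup_k GL_k(A)$ (with $x\mapsto x\boxplus1$), $\boxplus$ is block diagonal sum and $\boxplus^l x$ its $l$-fold iterate; idempotents $P,Q\in M_\infty(A)$ are equivalent, $P\sim Q$, if $UPU^{-1}=Q$ for some $U\in GL_\infty(A)$; $\mathfrak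 P(A)$ is the abelian monoid of equivalence classes under $\boxplus$. The rank of an idempotent $P$ over $\mathcal T^{\otimes n}$ is the (constant) rank of the matrix $\sigma_n(P)(t)$, $t\in\mathbb T^n$; $\mathfrak P_m(\mathcal T^{\otimes n})$ is the set of classes of rank $m$. For $0\le j\le n$, $l\ge0$: $P_{j,l}:=\boxplus^l\big((\otimes^jI)\otimes(\otimes^{n-j}P_1)\big)\in M_l(\mathcal T^{\otimes n})$. A permutation $\Theta$ of $\{1,\dots,n\}$ acts on $\mathcal T^{\otimes n}$ (entrywise on matrices) by permuting tensor factors; $\Theta$ is a $(j,n-j)$-shuffle if $\Theta(1)<\dots<\Theta(j)$ and $\Theta(j+1)<\dots<\Theta(n)$. $\Omega:=\{(j,\Theta):0\le j\le n,\ \Theta\text{ a }(j,n-j)\text{-shuffle}\}$, partially ordered by $(j',\Theta')\prec(j,\Theta)$ iff $\Theta(\{1,\dots,j\})\supsetneq\Theta'(\{1,\dots,j'\})$ (with $\{1,\dots,0\}=\emptyset$). $\mathfrak P'_0(\mathcal T^{\otimes n})$ is the set of classes of finite $\boxplus$-sums of projections $\Theta(P_{j,l})$ with $(j,\Theta)\in\Omega$, $j\le n-1$, $l\ge0$; for $m\ge1$, $\mathfrak P'_m(\mathcal T^{\otimes n}):=\{[\boxplus^m\tilde I]\}$ (note $P_{n,m}=\boxplus^m\tilde I$). *)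

theory Defs
  imports "HOL-Analysis.Analysis" "HOL-Combinatorics.Permutations"
begin

text \<open>
The spatial tensor product of n copies of the Toeplitz algebra
is realised as the C*-algebra on l2(N^n) generated by the n commuting shifts
S_i (shift in the i-th coordinate, i < n; tensor factor i+1 of the paper).  A bounded operator on l2(N^n)
is represented by its matrix ("kernel") K x y = <e_x, K e_y>, vanishing outside
N^n x N^n.
\<close>

type_synonym kern = "nat list \<Rightarrow> nat list \<Rightarrow> complex"

definition pts :: "nat \<Rightarrow> nat list set" where
  "pts n = {x. length x = n}"

definition kzero :: kern where
  "kzero = (\<lambda>x y. 0)"

definition kadd :: "kern \<Rightarrow> kern \<Rightarrow> kern" where
  "kadd A B = (\<lambda>x y. A x y + B x y)"

definition kscale :: "complex \<Rightarrow> kern \<Rightarrow> kern" where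
  "kscale c A = (\<lambda>x y. c * A x y)"

definition kadj :: "kern \<Rightarrow> kern" where
  "kadj A = (\<lambda>x y. cnj (A y x))"

text \<open>Operator composition (matrix product, an absolutely convergent sum for bounded operators).\<close>
definition kmult :: "nat \<Rightarrow> kern \<Rightarrow> kern \<Rightarrow> kern" where
  "kmult n A B = (\<lambda>x z. if x \<in> pts n \<and> z \<in> pts n
                          then (\<Sum>\<^sub>\<infinity> y\<in>pts n. A x y * B y z) else 0)"

definition kid :: "nat \<Rightarrow> kern" where
  "kid n = (\<lambda>x y. if x \<in> pts n \<and> x = y then 1 else 0)"

definition kshift :: "nat \<Rightarrow> nat \<Rightarrow> kern" where
  "kshift n i = (\<lambda>x y. if y \<in> pts n \<and> x = y[i := Suc (y ! i)] then 1 else 0)"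

definition vsupp :: "(nat list \<Rightarrow> complex) \<Rightarrow> nat list set" where
  "vsupp v = {x. v x \<noteq> 0}"

definition fvec :: "nat \<Rightarrow> (nat list \<Rightarrow> complex) set" where
  "fvec n = {v. finite (vsupp v) \<and> vsupp v \<subseteq> pts n}"

definition vnorm :: "(nat list \<Rightarrow> complex) \<Rightarrow> real" where
  "vnorm v = sqrt (\<Sum>x\<in>vsupp v. (cmod (v x))\<^sup>2)"

definition kform :: "kern \<Rightarrow> (nat list \<Rightarrow> complex) \<Rightarrow> (nat list \<Rightarrow> complex) \<Rightarrow> complex" where
  "kform K u v = (\<Sum>x\<in>vsupp u. \<Sum>y\<in>vsupp v. cnj (u x) * K x y * v y)"

definition kvals :: "nat \<Rightarrow> kern \<Rightarrow> real set" where
  "kvals n K = {cmod (kform K u v) | u v. u \<in> fvec n \<and> v \<in> fvec n \<and> vnorm u \<le> 1 \<and> vnorm v \<le> 1}"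

definition kbounded :: "nat \<Rightarrow> kern \<Rightarrow> bool" where
  "kbounded n K \<longleftrightarrow> bdd_above (kvals n K)"

definition knorm :: "nat \<Rightarrow> kern \<Rightarrow> real" where
  "knorm n K = Sup (kvals n K)"

definition ksupp :: "nat \<Rightarrow> kern \<Rightarrow> bool" where
  "ksupp n K \<longleftrightarrow> (\<forall>x y. K x y \<noteq> 0 \<longrightarrow> x \<in> pts n \<and> y \<in> pts n)"

inductive_set polyalg :: "nat \<Rightarrow> kern set" for n :: nat where
  pa_id: "kid n \<in> polyalg n"
| pa_shift: "i < n \<Longrightarrow> kshift n i \<in> polyalg n"
| pa_shift_adj: "i < n \<Longrightarrow> kadj (kshift n i) \<in> polyalg n"
| pa_add: "A \<in> polyalg n \<Longrightarrow> B \<in> polyalg n \<Longrightarrow> kadd A B \<in> polyalg n"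
| pa_scale: "A \<in> polyalg n \<Longrightarrow> kscale c A \<in> polyalg n"
| pa_mult: "A \<in> polyalg n \<Longrightarrow> B \<in> polyalg n \<Longrightarrow> kmult n A B \<in> polyalg n"

definition toeplitz :: "nat \<Rightarrow> kern set" where
  "toeplitz n = {K. ksupp n K \<and> kbounded n K \<and>
      (\<forall>e>0. \<exists>A\<in>polyalg n. knorm n (\<lambda>x y. K x y - A x y) < e)}"

text \<open>Matrices over T^(tensor n): entries indexed by nat, zero outside the k x k block
  (so M_k embeds in M_(k+1) via x \<mapsto> x \<boxplus> 0 literally as the same function).\<close>
type_synonym kmat = "nat \<Rightarrow> nat \<Rightarrow> kern"

definition inMk :: "nat \<Rightarrow> nat \<Rightarrow> kmat \<Rightarrow> bool" where
  "inMk n k M \<longleftrightarrow> (\<forall>i j. (i < k \<and> j < k \<longrightarrow> M i j \<in> toeplitz n) \<and>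
                           (\<not> (i < k \<and> j < k) \<longrightarrow> M i j = kzero))"

definition mmult :: "nat \<Rightarrow> nat \<Rightarrow> kmat \<Rightarrow> kmat \<Rightarrow> kmat" where
  "mmult n k A B = (\<lambda>i j. if i < k \<and> j < k
      then (\<lambda>x y. \<Sum>r<k. kmult n (A i r) (B r j) x y) else kzero)"

definition munit :: "nat \<Rightarrow> nat \<Rightarrow> kmat" where
  "munit n k = (\<lambda>i j. if i < k \<and> i = j then kid n else kzero)"

text \<open>Equivalence of idempotents in M_infinity: conjugate by some U in GL_k (k large enough
  to contain both; GL_k embeds in GL_infinity via x \<mapsto> x \<boxplus> 1).\<close>
definition mequiv :: "nat \<Rightarrow> kmat \<Rightarrow> kmat \<Rightarrow> bool" where
  "mequiv n P Q \<longleftrightarrow> (\<exists>k U V. inMk n k P \<and> inMk n k Q \<and> inMk n k U \<and> inMk n k V \<and>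
      mmult n k U V = munit n k \<and> mmult n k V U = munit n k \<and>
      mmult n k (mmult n k U P) V = Q)"

definition bsum :: "nat \<Rightarrow> kmat \<Rightarrow> kmat \<Rightarrow> kmat" where
  "bsum a A B = (\<lambda>i j. if i < a \<and> j < a then A i j
                       else if a \<le> i \<and> a \<le> j then B (i - a) (j - a) else kzero)"

text \<open>(tensor^j I) tensor (tensor^(n-j) P_1): projection onto span of e_x with x_i = 0 for j \<le> i < n.\<close>
definition pj :: "nat \<Rightarrow> nat \<Rightarrow> kern" where
  "pj n j = (\<lambda>x y. if x \<in> pts n \<and> x = y \<and> (\<forall>i. j \<le> i \<and> i < n \<longrightarrow> x ! i = 0) then 1 else 0)"

definition Pjl :: "nat \<Rightarrow> nat \<Rightarrow> nat \<Rightarrow> kmat" where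
  "Pjl n j l = (\<lambda>i k. if i < l \<and> i = k then pj n j else kzero)"

text \<open>Action of a permutation p of {0..<n} by permuting tensor factors:
  p(a_0 \<otimes> ... \<otimes> a_(n-1)) has a_k in tensor slot p k.\<close>
definition perm_k :: "nat \<Rightarrow> (nat \<Rightarrow> nat) \<Rightarrow> kern \<Rightarrow> kern" where
  "perm_k n p K = (\<lambda>x y. if x \<in> pts n \<and> y \<in> pts n
      then K (map (\<lambda>k. x ! p k) [0..<n]) (map (\<lambda>k. y ! p k) [0..<n]) else 0)"

definition perm_m :: "nat \<Rightarrow> (nat \<Rightarrow> nat) \<Rightarrow> kmat \<Rightarrow> kmat" where
  "perm_m n p M = (\<lambda>i j. perm_k n p (M i j))"

text \<open>(j, n-j)-shuffles (0-based indexing).\<close>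
definition shuffle :: "nat \<Rightarrow> nat \<Rightarrow> (nat \<Rightarrow> nat) \<Rightarrow> bool" where
  "shuffle n j p \<longleftrightarrow> p permutes {..<n} \<and> strict_mono_on {..<j} p \<and> strict_mono_on {j..<n} p"

definition Omega :: "nat \<Rightarrow> (nat \<times> (nat \<Rightarrow> nat)) set" where
  "Omega n = {(j, p). j \<le> n \<and> shuffle n j p}"

definition omega_prec :: "nat \<times> (nat \<Rightarrow> nat) \<Rightarrow> nat \<times> (nat \<Rightarrow> nat) \<Rightarrow> bool" where
  "omega_prec a b \<longleftrightarrow> (snd a ` {..<fst a} \<subset> snd b ` {..<fst b})"

text \<open>Finite \<boxplus>-sums of generators Theta(P_(j,l)), given as lists of (j, Theta, l).\<close>
fun gsize :: "(nat \<times> (nat \<Rightarrow> nat) \<times> nat) list \<Rightarrow> nat" where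
  "gsize [] = 0"
| "gsize ((j, p, l) # gs) = l + gsize gs"

fun gsum :: "nat \<Rightarrow> (nat \<times> (nat \<Rightarrow> nat) \<times> nat) list \<Rightarrow> kmat" where
  "gsum n [] = (\<lambda>i j. kzero)"
| "gsum n ((j, p, l) # gs) = bsum l (perm_m n p (Pjl n j l)) (gsum n gs)"

end

theory Submission
  imports Defs
begin

definition pk :: "nat list set \<Rightarrow> (nat list \<Rightarrow> nat list) \<Rightarrow> kern" where
  "pk D f = (\<lambda>x y. if y \<in> D \<and> x = f y then 1 else 0)"

lemma pk_empty[simp]: "pk {} f = kzero"
  by (simp add: pk_def kzero_def)

lemma pk_cong: "D = D' \<Longrightarrow> (\<And>y. y \<in> D \<Longrightarrow> f y = g y) \<Longrightarrow> pk D f = pk D' g"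
  unfolding pk_def by (intro ext) auto

lemma kid_pk: "kid n = pk (pts n) id"
  unfolding kid_def pk_def by (intro ext) auto

lemma infsum_single_pt:
  fixes f :: "'a \<Rightarrow> complex"
  assumes "\<And>y. y \<in> S \<Longrightarrow> y \<noteq> a \<Longrightarrow> f y = 0"
  shows "infsum f S = (if a \<in> S then f a else 0)"
proof -
  have "infsum f S = infsum f (S \<inter> {a})"
    by (rule infsum_cong_neutral) (use assms in auto)
  also have "\<dots> = (if a \<in> S then f a else 0)" by (cases "a \<in> S") auto
  finally show ?thesis .
qed

lemma kmult_pk:
  assumes "D \<subseteq> pts n" "E \<subseteq> pts n" "f ` D \<subseteq> pts n"
  shows "kmult n (pk D f) (pk E g) = pk {y \<in> E. g y \<in> D} (f \<circ> g)"
proof (intro ext)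
  fix x z
  show "kmult n (pk D f) (pk E g) x z = pk {y \<in> E. g y \<in> D} (f \<circ> g) x z"
  proof (cases "x \<in> pts n \<and> z \<in> pts n")
    case True
    have "(\<Sum>\<^sub>\<infinity> y\<in>pts n. pk D f x y * pk E g y z) = (if g z \<in> pts n then pk D f x (g z) * pk E g (g z) z else 0)"
      by (rule infsum_single_pt) (auto simp: pk_def)
    then show ?thesis using True assms by (auto simp: kmult_def pk_def)
  next
    case False
    then show ?thesis using assms by (auto simp: kmult_def pk_def)
  qed
qed

lemma kadj_pk: "inj_on f D \<Longrightarrow> kadj (pk D f) = pk (f ` D) (inv_into D f)"
  unfolding kadj_def pk_def by (intro ext) auto

lemma kzero_polyalg: "kzero \<in> polyalg n"
proof -
  have "kscale 0 (kid n) = kzero" by (simp add: kscale_def kzero_def)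
  then show ?thesis using polyalg.pa_scale[OF polyalg.pa_id[of n], of 0] by simp
qed

lemma kadj_polyalg: "A \<in> polyalg n \<Longrightarrow> kadj A \<in> polyalg n"
proof (induction rule: polyalg.induct)
  case pa_id
  have "kadj (kid n) = kid n" by (intro ext) (auto simp: kadj_def kid_def)
  then show ?case using polyalg.pa_id by simp
next
  case (pa_shift i)
  then show ?case by (rule polyalg.pa_shift_adj)
next
  case (pa_shift_adj i)
  have "kadj (kadj (kshift n i)) = kshift n i" by (simp add: kadj_def)
  then show ?case using polyalg.pa_shift[OF pa_shift_adj(1)] by simp
next
  case (pa_add A B)
  have "kadj (kadd A B) = kadd (kadj A) (kadj B)" by (simp add: kadj_def kadd_def)
  then show ?case using polyalg.pa_add[OF pa_add(3,4)] by simp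
next
  case (pa_scale A c)
  have "kadj (kscale c A) = kscale (cnj c) (kadj A)" by (simp add: kadj_def kscale_def)
  then show ?case using polyalg.pa_scale[OF pa_scale(2)] by simp
next
  case (pa_mult A B)
  have "kadj (kmult n A B) = kmult n (kadj B) (kadj A)"
    unfolding kadj_def kmult_def by (intro ext) (auto simp flip: infsum_cnj simp: mult.commute)
  then show ?case using polyalg.pa_mult[OF pa_mult(4,3)] by simp
qed

lemma sum_polyalg: "(\<And>r. r < (K::nat) \<Longrightarrow> F r \<in> polyalg n) \<Longrightarrow> (\<lambda>x y. \<Sum>r<K. F r x y) \<in> polyalg n"
proof (induction K)
  case 0
  then show ?case using kzero_polyalg by (simp add: kzero_def)
next
  case (Suc K)
  have "(\<lambda>x y. \<Sum>r<Suc K. F r x y) = kadd (\<lambda>x y. \<Sum>r<K. F r x y) (F K)"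
    by (simp add: kadd_def)
  then show ?case using Suc polyalg.pa_add by simp
qed

lemma pk_union: "D1 \<inter> D2 = {} \<Longrightarrow> pk (D1 \<union> D2) f = kadd (pk D1 f) (pk D2 f)"
  unfolding pk_def kadd_def by (intro ext) auto

lemma pk_diff: "E \<subseteq> D \<Longrightarrow> pk (D - E) f = kadd (pk D f) (kscale (-1) (pk E f))"
  unfolding pk_def kadd_def kscale_def by (intro ext) auto

lemma pk_diff_polyalg: "E \<subseteq> D \<Longrightarrow> pk D f \<in> polyalg n \<Longrightarrow> pk E f \<in> polyalg n \<Longrightarrow> pk (D - E) f \<in> polyalg n"
  using pk_diff[of E D f] polyalg.pa_add polyalg.pa_scale by metis

lemma pk_union_polyalg: "D1 \<inter> D2 = {} \<Longrightarrow> pk D1 f \<in> polyalg n \<Longrightarrow> pk D2 f \<in> polyalg n \<Longrightarrow> pk (D1 \<union> D2) f \<in> polyalg n"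
  using pk_union polyalg.pa_add by metis

lemma sumsq_le1: "vnorm u \<le> 1 \<Longrightarrow> (\<Sum>x\<in>vsupp u. (cmod (u x))\<^sup>2) \<le> 1"
  unfolding vnorm_def by (metis real_sqrt_le_1_iff)

lemma pk_form_bound:
  assumes inj: "inj_on f D" and u: "u \<in> fvec n" and v: "v \<in> fvec n"
    and nu: "vnorm u \<le> 1" and nv: "vnorm v \<le> 1"
  shows "cmod (kform (pk D f) u v) \<le> 1"
proof -
  let ?Su = "vsupp u" and ?Sv = "vsupp v"
  have fu: "finite ?Su" and fv: "finite ?Sv" using u v by (auto simp: fvec_def)
  define T where "T = {y \<in> ?Sv. y \<in> D \<and> f y \<in> ?Su}"
  have "kform (pk D f) u v = (\<Sum>y\<in>?Sv. \<Sum>x\<in>?Su. cnj (u x) * pk D f x y * v y)"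
    unfolding kform_def by (rule sum.swap)
  also have "\<dots> = (\<Sum>y\<in>?Sv. if y \<in> D \<and> f y \<in> ?Su then cnj (u (f y)) * v y else 0)"
  proof (rule sum.cong[OF refl])
    fix y assume "y \<in> ?Sv"
    have "(\<Sum>x\<in>?Su. cnj (u x) * pk D f x y * v y) = (\<Sum>x\<in>?Su. if x = f y then (if y \<in> D then cnj (u (f y)) * v y else 0) else 0)"
      by (rule sum.cong) (auto simp: pk_def)
    also have "\<dots> = (if y \<in> D \<and> f y \<in> ?Su then cnj (u (f y)) * v y else 0)"
      using fu by (simp add: sum.delta')
    finally show "(\<Sum>x\<in>?Su. cnj (u x) * pk D f x y * v y) = (if y \<in> D \<and> f y \<in> ?Su then cnj (u (f y)) * v y else 0)" .
  qed
  finally have eq: "kform (pk D f) u v = (\<Sum>y\<in>?Sv. if y \<in> D \<and> f y \<in> ?Su then cnj (u (f y)) * v y else 0)" .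
  have "cmod (kform (pk D f) u v) \<le> (\<Sum>y\<in>?Sv. cmod (if y \<in> D \<and> f y \<in> ?Su then cnj (u (f y)) * v y else 0))"
    unfolding eq by (rule norm_sum)
  also have "\<dots> \<le> (\<Sum>y\<in>?Sv. (if y \<in> T then (cmod (u (f y)))\<^sup>2 / 2 else 0) + (cmod (v y))\<^sup>2 / 2)"
  proof (rule sum_mono)
    fix y assume y: "y \<in> ?Sv"
    have "cmod (u (f y)) * cmod (v y) \<le> (cmod (u (f y)))\<^sup>2 / 2 + (cmod (v y))\<^sup>2 / 2"
      using sum_squares_bound[of "cmod (u (f y))" "cmod (v y)"] by (simp add: power2_eq_square field_simps)
      
    then show "cmod (if y \<in> D \<and> f y \<in> ?Su then cnj (u (f y)) * v y else 0) \<le> (if y \<in> T then (cmod (u (f y)))\<^sup>2 / 2 else 0) + (cmod (v y))\<^sup>2 / 2"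
      using y by (auto simp: T_def norm_mult)
  qed
  also have "\<dots> = (\<Sum>y\<in>T. (cmod (u (f y)))\<^sup>2) / 2 + (\<Sum>y\<in>?Sv. (cmod (v y))\<^sup>2) / 2"
    using fv by (simp add: sum.distrib sum.If_cases T_def sum_divide_distrib Int_def)
  also have "(\<Sum>y\<in>T. (cmod (u (f y)))\<^sup>2) = (\<Sum>x\<in>f ` T. (cmod (u x))\<^sup>2)"
    by (rule sum.reindex[symmetric, unfolded comp_def]) (use inj in \<open>auto simp: T_def intro: inj_on_subset\<close>)
  also have "\<dots> \<le> (\<Sum>x\<in>?Su. (cmod (u x))\<^sup>2)"
    by (rule sum_mono2) (use fu in \<open>auto simp: T_def\<close>)
  finally show ?thesis using sumsq_le1[OF nu] sumsq_le1[OF nv] by linarith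
qed

lemma kvals_zero: "kvals n (\<lambda>x y. 0) = {0}"
proof -
  have "(\<lambda>x. 0) \<in> fvec n" by (simp add: fvec_def vsupp_def)
  moreover have "vnorm (\<lambda>x. 0) = 0" by (simp add: vnorm_def vsupp_def)
  ultimately show ?thesis unfolding kvals_def kform_def by force
qed

lemma pk_toeplitz:
  assumes "D \<subseteq> pts n" "f ` D \<subseteq> pts n" "inj_on f D" "pk D f \<in> polyalg n"
  shows "pk D f \<in> toeplitz n"
  unfolding toeplitz_def
proof (intro CollectI conjI allI impI)
  show "ksupp n (pk D f)" using assms(1,2) by (auto simp: ksupp_def pk_def)
  show "kbounded n (pk D f)" unfolding kbounded_def bdd_above_def kvals_def
    using pk_form_bound[OF assms(3)] by blast
  fix e :: real assume "0 < e"
  have "knorm n (\<lambda>x y. pk D f x y - pk D f x y) = 0" by (simp add: knorm_def kvals_zero)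
  then show "\<exists>A\<in>polyalg n. knorm n (\<lambda>x y. pk D f x y - A x y) < e" using assms(4) \<open>0 < e\<close> by force
qed

type_synonym pt = "nat \<times> nat list"

definition mp :: "pt set \<Rightarrow> (pt \<Rightarrow> pt) \<Rightarrow> kmat" where
  "mp D t = (\<lambda>i j. pk {y. (j, y) \<in> D \<and> fst (t (j, y)) = i} (\<lambda>y. snd (t (j, y))))"

definition good :: "nat \<Rightarrow> pt set \<Rightarrow> (pt \<Rightarrow> pt) \<Rightarrow> bool" where
  "good n D t \<longleftrightarrow> (\<forall>i j. mp D t i j \<in> polyalg n)"

definition wf :: "nat \<Rightarrow> pt set \<Rightarrow> (pt \<Rightarrow> pt) \<Rightarrow> bool" where
  "wf n D t \<longleftrightarrow> D \<subseteq> UNIV \<times> pts n \<and> t ` D \<subseteq> UNIV \<times> pts n"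

lemma mp_cong: "D = D' \<Longrightarrow> (\<And>z. z \<in> D \<Longrightarrow> t z = t' z) \<Longrightarrow> mp D t = mp D' t'"
  unfolding mp_def pk_def by (intro ext) auto

lemma good_cong: "D = D' \<Longrightarrow> (\<And>z. z \<in> D \<Longrightarrow> t z = t' z) \<Longrightarrow> good n D t = good n D' t'"
  unfolding good_def using mp_cong by metis

lemma mp_mult_entry:
  assumes wt: "wf n D t" and ws: "wf n E s" and K: "fst ` s ` E \<subseteq> {..<K}"
  shows "(\<lambda>x y. \<Sum>r<K. kmult n (mp D t i r) (mp E s r j) x y) = mp {z\<in>E. s z \<in> D} (t \<circ> s) i j"
proof -
  have "kmult n (mp D t i r) (mp E s r j) =
     pk {y \<in> {y. (j, y) \<in> E \<and> fst (s (j, y)) = r}. snd (s (j, y)) \<in> {y. (r, y) \<in> D \<and> fst (t (r, y)) = i}}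
        ((\<lambda>y. snd (t (r, y))) \<circ> (\<lambda>y. snd (s (j, y))))" for r
    unfolding mp_def
    by (rule kmult_pk) (use wt ws in \<open>auto simp: wf_def\<close>)
  then have eq: "(\<lambda>x y. \<Sum>r<K. kmult n (mp D t i r) (mp E s r j) x y) =
     (\<lambda>x y. \<Sum>r<K. if r = fst (s (j, y)) then
         (if (j, y) \<in> E \<and> s (j, y) \<in> D \<and> fst (t (s (j, y))) = i \<and> x = snd (t (s (j, y))) then 1 else 0) else 0)"
    by (intro ext sum.cong) (auto simp: pk_def prod_eq_iff)
  show ?thesis unfolding eq
  proof (intro ext)
    fix x y
    show "(\<Sum>r<K. if r = fst (s (j, y)) then
         (if (j, y) \<in> E \<and> s (j, y) \<in> D \<and> fst (t (s (j, y))) = i \<and> x = snd (t (s (j, y))) then 1 else 0) else 0) =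
       mp {z \<in> E. s z \<in> D} (t \<circ> s) i j x y"
      using K by (auto simp: sum.delta mp_def pk_def)
  qed
qed

lemma mmult_mp:
  assumes wt: "wf n D t" and ws: "wf n E s" and "E \<subseteq> {..<k} \<times> UNIV" "s ` E \<subseteq> {..<k} \<times> UNIV"
    "t ` D \<subseteq> {..<k} \<times> UNIV"
  shows "mmult n k (mp D t) (mp E s) = mp {z\<in>E. s z \<in> D} (t \<circ> s)"
proof (rule ext, rule ext)
  fix i j
  show "mmult n k (mp D t) (mp E s) i j = mp {z \<in> E. s z \<in> D} (t \<circ> s) i j"
  proof (cases "i < k \<and> j < k")
    case True
    have K: "fst ` s ` E \<subseteq> {..<k}" using assms(4) by auto
    show ?thesis using True mp_mult_entry[OF wt ws K, of i j] by (simp add: mmult_def)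
  next
    case False
    have "{y. (j, y) \<in> {z \<in> E. s z \<in> D} \<and> fst ((t \<circ> s) (j, y)) = i} = {}"
      using False assms(3,5) by fastforce
    then have "mp {z \<in> E. s z \<in> D} (t \<circ> s) i j = kzero" unfolding mp_def by (metis pk_empty)
    then show ?thesis using False unfolding mmult_def by presburger
  qed
qed

lemma good_comp:
  assumes "good n D t" "good n E s" "wf n D t" "wf n E s" "s ` E \<subseteq> D" "fst ` s ` E \<subseteq> {..<K}"
  shows "good n E (t \<circ> s)"
  unfolding good_def
proof (intro allI)
  fix i j
  have "{z\<in>E. s z \<in> D} = E" using assms(5) by auto
  then have "mp E (t \<circ> s) i j = (\<lambda>x y. \<Sum>r<K. kmult n (mp D t i r) (mp E s r j) x y)"
    using mp_mult_entry[OF assms(3,4,6), of i j] by simp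
  also have "\<dots> \<in> polyalg n"
    by (rule sum_polyalg) (use assms(1,2) in \<open>auto simp: good_def intro: polyalg.pa_mult\<close>)
  finally show "mp E (t \<circ> s) i j \<in> polyalg n" .
qed

lemma good_union:
  assumes "good n D1 t" "good n D2 t" "D1 \<inter> D2 = {}"
  shows "good n (D1 \<union> D2) t"
  unfolding good_def
proof (intro allI)
  fix i j
  have "mp (D1 \<union> D2) t i j = pk ({y. (j, y) \<in> D1 \<and> fst (t (j, y)) = i} \<union> {y. (j, y) \<in> D2 \<and> fst (t (j, y)) = i}) (\<lambda>y. snd (t (j, y)))"
    unfolding mp_def by (rule pk_cong) auto
  also have "\<dots> \<in> polyalg n"
    by (rule pk_union_polyalg) (use assms in \<open>auto simp: good_def mp_def\<close>)
  finally show "mp (D1 \<union> D2) t i j \<in> polyalg n" .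
qed

lemma good_inv:
  assumes "inj_on t D" "good n D t"
  shows "good n (t ` D) (inv_into D t)"
  unfolding good_def
proof (intro allI)
  fix i j
  have "mp (t ` D) (inv_into D t) i j = kadj (mp D t j i)"
  proof (intro ext)
    fix x y
    have "((j, y) \<in> t ` D \<and> inv_into D t (j, y) = (i, x)) \<longleftrightarrow> ((i, x) \<in> D \<and> t (i, x) = (j, y))"
      using assms(1) by (metis f_inv_into_f inv_into_f_f inv_into_into image_eqI)
    then show "mp (t ` D) (inv_into D t) i j x y = kadj (mp D t j i) x y"
      unfolding mp_def pk_def kadj_def by (auto simp: prod_eq_iff)
  qed
  then show "mp (t ` D) (inv_into D t) i j \<in> polyalg n"
    using assms(2) kadj_polyalg by (simp add: good_def)
qed

definition dgood :: "nat \<Rightarrow> pt set \<Rightarrow> bool" where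
  "dgood n C \<longleftrightarrow> (\<forall>j. pk {y. (j, y) \<in> C} id \<in> polyalg n)"

lemma good_blockmap:
  assumes "dgood n C"
  shows "good n C (\<lambda>z. (\<rho> (fst z), snd z))"
  unfolding good_def
proof (intro allI)
  fix i j
  show "mp C (\<lambda>z. (\<rho> (fst z), snd z)) i j \<in> polyalg n"
  proof (cases "\<rho> j = i")
    case True
    then have "mp C (\<lambda>z. (\<rho> (fst z), snd z)) i j = pk {y. (j, y) \<in> C} id"
      unfolding mp_def by (rule_tac pk_cong) auto
    then show ?thesis using assms by (simp add: dgood_def)
  next
    case False
    then have "mp C (\<lambda>z. (\<rho> (fst z), snd z)) i j = kzero"
      unfolding mp_def by (simp add: pk_def kzero_def)
    then show ?thesis using kzero_polyalg by simp
  qed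
qed

lemma good_id: "dgood n C \<Longrightarrow> good n C id"
  using good_blockmap[of n C "\<lambda>j. j"] by (simp add: id_def)

lemma inMk_mp:
  assumes "wf n D t" "D \<subseteq> {..<k} \<times> UNIV" "t ` D \<subseteq> {..<k} \<times> UNIV" "inj_on t D" "good n D t"
  shows "inMk n k (mp D t)"
  unfolding inMk_def
proof (intro allI conjI impI)
  fix i j
  assume ij: "i < k \<and> j < k"
  show "mp D t i j \<in> toeplitz n" unfolding mp_def
  proof (rule pk_toeplitz)
    show "{y. (j, y) \<in> D \<and> fst (t (j, y)) = i} \<subseteq> pts n" using assms(1) by (auto simp: wf_def)
    show "(\<lambda>y. snd (t (j, y))) ` {y. (j, y) \<in> D \<and> fst (t (j, y)) = i} \<subseteq> pts n"
      using assms(1) by (force simp: wf_def)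
    show "inj_on (\<lambda>y. snd (t (j, y))) {y. (j, y) \<in> D \<and> fst (t (j, y)) = i}"
      using assms(4) unfolding inj_on_def by (metis (mono_tags, lifting) mem_Collect_eq prod.expand prod.inject)
    show "pk {y. (j, y) \<in> D \<and> fst (t (j, y)) = i} (\<lambda>y. snd (t (j, y))) \<in> polyalg n"
      using assms(5) by (simp add: good_def mp_def)
  qed
next
  fix i j
  assume ij: "\<not> (i < k \<and> j < k)"
  have "{y. (j, y) \<in> D \<and> fst (t (j, y)) = i} = {}" using ij assms(2,3) by fastforce
  then show "mp D t i j = kzero" unfolding mp_def by (metis pk_empty)
qed

lemma munit_mp: "munit n k = mp ({..<k} \<times> pts n) id"
  unfolding munit_def mp_def kid_pk by (intro ext) (auto simp: pk_def kzero_def)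

definition bnd :: "nat \<Rightarrow> pt set \<Rightarrow> bool" where
  "bnd n A \<longleftrightarrow> (\<exists>K. A \<subseteq> {..<K} \<times> pts n)"

definition mvn :: "nat \<Rightarrow> pt set \<Rightarrow> pt set \<Rightarrow> bool" where
  "mvn n A B \<longleftrightarrow> bnd n A \<and> bnd n B \<and> (\<exists>t. bij_betw t A B \<and> good n A t)"

definition shb :: "nat \<Rightarrow> pt \<Rightarrow> pt" where "shb k z = (fst z + k, snd z)"
definition unb :: "nat \<Rightarrow> pt \<Rightarrow> pt" where "unb k z = (fst z - k, snd z)"

lemma shb_eq: "shb k = (\<lambda>z. (fst z + k, snd z))" by (rule ext) (simp add: shb_def)
lemma unb_eq: "unb k = (\<lambda>z. (fst z - k, snd z))" by (rule ext) (simp add: unb_def)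

definition rot :: "nat \<Rightarrow> nat \<Rightarrow> pt set \<Rightarrow> pt set \<Rightarrow> (pt \<Rightarrow> pt) \<Rightarrow> (pt \<Rightarrow> pt) \<Rightarrow> pt \<Rightarrow> pt" where
  "rot n k A B f g z = (if z \<in> A then f z else if z \<in> {..<k} \<times> pts n then shb k z
      else if unb k z \<in> B then shb k (g (unb k z)) else unb k z)"

lemma dgood_diff:
  assumes "dgood n A" "A \<subseteq> {..<k} \<times> pts n"
  shows "dgood n ({..<k} \<times> pts n - A)"
  unfolding dgood_def
proof
  fix j
  show "pk {y. (j, y) \<in> {..<k} \<times> pts n - A} id \<in> polyalg n"
  proof (cases "j < k")
    case True
    have "{y. (j, y) \<in> {..<k} \<times> pts n - A} = pts n - {y. (j, y) \<in> A}" using True by auto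
    moreover have "pk (pts n - {y. (j, y) \<in> A}) id \<in> polyalg n"
      by (rule pk_diff_polyalg) (use assms in \<open>auto simp: dgood_def kid_pk[symmetric] intro: polyalg.pa_id\<close>)
    ultimately show ?thesis by (simp only:)
  next
    case False
    then have "{y. (j, y) \<in> {..<k} \<times> pts n - A} = {}" by auto
    then show ?thesis by (metis pk_empty kzero_polyalg)
  qed
qed

lemma dgood_shb:
  assumes "dgood n A"
  shows "dgood n (shb k ` A)"
  unfolding dgood_def
proof
  fix j
  show "pk {y. (j, y) \<in> shb k ` A} id \<in> polyalg n"
  proof (cases "k \<le> j")
    case True
    have "{y. (j, y) \<in> shb k ` A} = {y. (j - k, y) \<in> A}"
      using True by (auto simp: shb_def image_iff) (metis True fst_conv le_add_diff_inverse2 snd_conv)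
    then show ?thesis using assms by (simp add: dgood_def)
  next
    case False
    then have "{y. (j, y) \<in> shb k ` A} = {}" by (auto simp: shb_def)
    then show ?thesis using kzero_polyalg by simp
  qed
qed

lemma good_rot:
  assumes gf: "good n A f" and gg: "good n B g" and fA: "f ` A = B" and gB: "g ` B = A"
    and dA: "dgood n A" and dB: "dgood n B" and Ak: "A \<subseteq> {..<k} \<times> pts n" and Bk: "B \<subseteq> {..<k} \<times> pts n"
  shows "good n ({..<2*k} \<times> pts n) (rot n k A B f g)"
proof -
  let ?Dk = "{..<k} \<times> pts n"
  have split: "{..<2*k} \<times> pts n = (A \<union> (?Dk - A)) \<union> (shb k ` B \<union> shb k ` (?Dk - B))"
  proof (intro equalityI subsetI)
    fix z assume z: "z \<in> {..<2*k} \<times> pts n"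
    show "z \<in> (A \<union> (?Dk - A)) \<union> (shb k ` B \<union> shb k ` (?Dk - B))"
    proof (cases "fst z < k")
      case True then show ?thesis using z by auto
    next
      case False
      then have "z = shb k (unb k z)" by (simp add: shb_def unb_def)
      moreover have "unb k z \<in> ?Dk" using z False by (auto simp: unb_def)
      ultimately show ?thesis by (metis DiffI UnI1 UnI2 imageI)
    qed
  next
    fix z assume "z \<in> (A \<union> (?Dk - A)) \<union> (shb k ` B \<union> shb k ` (?Dk - B))"
    then show "z \<in> {..<2*k} \<times> pts n" using Ak Bk by (auto simp: shb_def)
  qed
  have wsh: "wf n C (shb k)" if "C \<subseteq> UNIV \<times> pts n" for C using that by (auto simp: wf_def shb_def)
  have wun: "wf n C (unb k)" if "C \<subseteq> UNIV \<times> pts n" for C using that by (auto simp: wf_def unb_def)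
  have g1: "good n A (rot n k A B f g)"
    using gf by (rule good_cong[THEN iffD1, rotated 2]) (auto simp: rot_def)
  have g2: "good n (?Dk - A) (rot n k A B f g)"
  proof -
    have "good n (?Dk - A) (\<lambda>z. ((\<lambda>j. j + k) (fst z), snd z))"
      by (rule good_blockmap, rule dgood_diff[OF dA Ak])
    then show ?thesis by (rule good_cong[THEN iffD1, rotated 2]) (auto simp: rot_def shb_def)
  qed
  have g3: "good n (shb k ` B) (rot n k A B f g)"
  proof -
    have u: "good n (shb k ` B) (unb k)"
      using good_blockmap[OF dgood_shb[OF dB], of k "\<lambda>j. j - k"] by (simp add: unb_eq)
    have gu: "good n (shb k ` B) (g \<circ> unb k)"
    proof (rule good_comp[OF gg u])
      show "wf n B g" using gB Ak Bk unfolding wf_def by auto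
      show "wf n (shb k ` B) (unb k)" using Bk by (intro wun) (auto simp: shb_def)
      show "unb k ` shb k ` B \<subseteq> B" by (auto simp: unb_def shb_def)
      show "fst ` unb k ` shb k ` B \<subseteq> {..<k}" using Bk by (auto simp: unb_def shb_def)
    qed
    have s: "good n A (shb k)"
      using good_blockmap[OF dA, of "\<lambda>j. j + k"] by (simp add: shb_eq)
    have "good n (shb k ` B) (shb k \<circ> (g \<circ> unb k))"
    proof (rule good_comp[OF s gu])
      show "wf n A (shb k)" using Ak by (intro wsh) auto
      show "wf n (shb k ` B) (g \<circ> unb k)" using Bk gB Ak unfolding wf_def by (force simp: shb_def unb_def)
      show "(g \<circ> unb k) ` shb k ` B \<subseteq> A" using gB by (force simp: unb_def shb_def)
      show "fst ` (g \<circ> unb k) ` shb k ` B \<subseteq> {..<k}" using gB Ak by (force simp: unb_def shb_def)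
    qed
    then show ?thesis
    proof (rule good_cong[THEN iffD1, rotated 2])
      fix z assume z: "z \<in> shb k ` B"
      then have "z \<notin> A" "z \<notin> ?Dk" "unb k z \<in> B" using Ak Bk by (auto simp: shb_def unb_def)
      then show "(shb k \<circ> (g \<circ> unb k)) z = rot n k A B f g z" by (simp add: rot_def)
    qed simp
  qed
  have g4: "good n (shb k ` (?Dk - B)) (rot n k A B f g)"
  proof -
    have u: "good n (shb k ` (?Dk - B)) (unb k)"
      using good_blockmap[OF dgood_shb[OF dgood_diff[OF dB Bk]], of k "\<lambda>j. j - k"] by (simp add: unb_eq)
    then show ?thesis
    proof (rule good_cong[THEN iffD1, rotated 2])
      fix z assume z: "z \<in> shb k ` (?Dk - B)"
      then have "z \<notin> A" "z \<notin> ?Dk" "unb k z \<notin> B" using Ak Bk by (auto simp: shb_def unb_def)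
      then show "unb k z = rot n k A B f g z" by (simp add: rot_def)
    qed simp
  qed
  have "good n ((A \<union> (?Dk - A)) \<union> (shb k ` B \<union> shb k ` (?Dk - B))) (rot n k A B f g)"
    apply (rule good_union)
      apply (rule good_union[OF g1 g2], blast)
     apply (rule good_union[OF g3 g4], force simp: shb_def)
    using Ak by (force simp: shb_def)
  then show ?thesis using split by simp
qed

lemma rot_inv:
  assumes fA: "\<And>x. x \<in> A \<Longrightarrow> f x \<in> B" and gf: "\<And>x. x \<in> A \<Longrightarrow> g (f x) = x"
    and gB: "\<And>y. y \<in> B \<Longrightarrow> g y \<in> A" and fg: "\<And>y. y \<in> B \<Longrightarrow> f (g y) = y"
    and Ak: "A \<subseteq> {..<k} \<times> pts n" and Bk: "B \<subseteq> {..<k} \<times> pts n"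
    and z: "z \<in> {..<2*k} \<times> pts n"
  shows "rot n k A B f g z \<in> {..<2*k} \<times> pts n \<and> rot n k B A g f (rot n k A B f g z) = z"
proof (cases "z \<in> A")
  case True
  then have "f z \<in> B" using fA by blast
  then have "f z \<in> {..<2*k} \<times> pts n" using Bk by force
  moreover have "rot n k B A g f (f z) = g (f z)" using \<open>f z \<in> B\<close> by (simp add: rot_def)
  moreover have "rot n k A B f g z = f z" using True by (simp add: rot_def)
  ultimately show ?thesis using True gf by simp
next
  case nA: False
  show ?thesis
  proof (cases "z \<in> {..<k} \<times> pts n")
    case True
    have "shb k z \<notin> B" "shb k z \<notin> {..<k} \<times> pts n" using Bk by (auto simp: shb_def)
    moreover have "unb k (shb k z) = z" by (simp add: shb_def unb_def)
    ultimately show ?thesis using True nA by (auto simp: rot_def shb_def)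
  next
    case nD: False
    then have fz: "k \<le> fst z" using z by auto
    have uz: "unb k z \<in> {..<k} \<times> pts n" using z nD by (auto simp: unb_def)
    have sz: "shb k (unb k z) = z" using fz by (simp add: shb_def unb_def)
    show ?thesis
    proof (cases "unb k z \<in> B")
      case True
      have gA: "g (unb k z) \<in> A" using gB True by simp
      then have "shb k (g (unb k z)) \<notin> B" "shb k (g (unb k z)) \<notin> {..<k} \<times> pts n"
        "unb k (shb k (g (unb k z))) = g (unb k z)" using Bk Ak by (auto simp: shb_def unb_def)
      moreover have "shb k (g (unb k z)) \<in> {..<2*k} \<times> pts n" using gA Ak by (auto simp: shb_def)
      ultimately show ?thesis using True nA nD gA fg sz by (auto simp: rot_def)
    next
      case False
      then show ?thesis using nA nD uz sz by (auto simp: rot_def)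
    qed
  qed
qed

lemma mequiv_of_mvn:
  assumes m: "mvn n A B" and dA: "dgood n A" and dB: "dgood n B"
    and Ak: "A \<subseteq> {..<k} \<times> pts n" and Bk: "B \<subseteq> {..<k} \<times> pts n"
  shows "mequiv n (mp A id) (mp B id)"
proof -
  obtain f where bf: "bij_betw f A B" and gf: "good n A f" using m by (auto simp: mvn_def)
  define g where "g = inv_into A f"
  have fA: "f ` A = B" and injf: "inj_on f A" using bf by (auto simp: bij_betw_def)
  have gg: "good n B g" unfolding g_def using good_inv[OF injf gf] fA by simp
  have gB: "g ` B = A" unfolding g_def using bf by (metis bij_betw_def bij_betw_inv_into)
  have p1: "\<And>x. x \<in> A \<Longrightarrow> f x \<in> B" using fA by auto
  have p2: "\<And>x. x \<in> A \<Longrightarrow> g (f x) = x" unfolding g_def using injf by simp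
  have p3: "\<And>y. y \<in> B \<Longrightarrow> g y \<in> A" using gB by auto
  have p4: "\<And>y. y \<in> B \<Longrightarrow> f (g y) = y" unfolding g_def using fA by (simp add: f_inv_into_f)
  define D2 where "D2 = {..<2*k} \<times> pts n"
  define s where "s = rot n k A B f g"
  define r where "r = rot n k B A g f"
  have sr: "\<And>z. z \<in> D2 \<Longrightarrow> s z \<in> D2 \<and> r (s z) = z"
    unfolding s_def r_def D2_def by (rule rot_inv[OF p1 p2 p3 p4 Ak Bk])
  have rs: "\<And>z. z \<in> D2 \<Longrightarrow> r z \<in> D2 \<and> s (r z) = z"
    unfolding s_def r_def D2_def by (rule rot_inv[OF p3 p4 p1 p2 Bk Ak])
  have gs: "good n D2 s" unfolding s_def D2_def by (rule good_rot[OF gf gg fA gB dA dB Ak Bk])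
  have gr: "good n D2 r" unfolding r_def D2_def by (rule good_rot[OF gg gf gB fA dB dA Bk Ak])
  have injs: "inj_on s D2" by (metis inj_onI sr)
  have injr: "inj_on r D2" by (metis inj_onI rs)
  have D2b: "D2 \<subseteq> {..<2*k} \<times> UNIV" unfolding D2_def by auto
  have D2w: "D2 \<subseteq> UNIV \<times> pts n" unfolding D2_def by auto
  have sD: "s ` D2 \<subseteq> D2" using sr by auto
  have rD: "r ` D2 \<subseteq> D2" using rs by auto
  have ws: "wf n D2 s" using D2w sD by (auto simp: wf_def)
  have wr: "wf n D2 r" using D2w rD by (auto simp: wf_def)
  have AD: "A \<subseteq> D2" and BD: "B \<subseteq> D2" using Ak Bk unfolding D2_def by auto
  have wA: "wf n A id" using AD D2w by (auto simp: wf_def)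
  have wB: "wf n B id" using BD D2w by (auto simp: wf_def)
  have wAs: "wf n A s" using AD D2w sD by (auto simp: wf_def)
  have sA: "\<And>z. z \<in> A \<Longrightarrow> s z = f z" unfolding s_def rot_def by simp
  have rB: "\<And>z. z \<in> B \<Longrightarrow> r z = g z" unfolding r_def rot_def by simp
  have inA: "inMk n (2*k) (mp A id)"
    by (rule inMk_mp[OF wA]) (use AD D2b good_id[OF dA] in auto)
  have inB: "inMk n (2*k) (mp B id)"
    by (rule inMk_mp[OF wB]) (use BD D2b good_id[OF dB] in auto)
  have inU: "inMk n (2*k) (mp D2 s)" by (rule inMk_mp[OF ws D2b _ injs gs]) (use sD D2b in auto)
  have inV: "inMk n (2*k) (mp D2 r)" by (rule inMk_mp[OF wr D2b _ injr gr]) (use rD D2b in auto)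
  have UV: "mmult n (2*k) (mp D2 s) (mp D2 r) = munit n (2*k)"
  proof -
    have "mmult n (2*k) (mp D2 s) (mp D2 r) = mp {z\<in>D2. r z \<in> D2} (s \<circ> r)"
      by (rule mmult_mp[OF ws wr D2b]) (use sD rD D2b in auto)
    also have "\<dots> = mp D2 id" by (rule mp_cong) (use rs in auto)
    finally show ?thesis by (simp add: munit_mp D2_def)
  qed
  have VU: "mmult n (2*k) (mp D2 r) (mp D2 s) = munit n (2*k)"
  proof -
    have "mmult n (2*k) (mp D2 r) (mp D2 s) = mp {z\<in>D2. s z \<in> D2} (r \<circ> s)"
      by (rule mmult_mp[OF wr ws D2b]) (use sD rD D2b in auto)
    also have "\<dots> = mp D2 id" by (rule mp_cong) (use sr in auto)
    finally show ?thesis by (simp add: munit_mp D2_def)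
  qed
  have UPV: "mmult n (2*k) (mmult n (2*k) (mp D2 s) (mp A id)) (mp D2 r) = mp B id"
  proof -
    have "mmult n (2*k) (mp D2 s) (mp A id) = mp {z\<in>A. id z \<in> D2} (s \<circ> id)"
      by (rule mmult_mp[OF ws wA]) (use AD sD D2b in auto)
    also have "\<dots> = mp A s" by (rule mp_cong) (use AD in auto)
    finally have e1: "mmult n (2*k) (mp D2 s) (mp A id) = mp A s" .
    have "mmult n (2*k) (mp A s) (mp D2 r) = mp {z\<in>D2. r z \<in> A} (s \<circ> r)"
      by (rule mmult_mp[OF wAs wr D2b]) (use AD sD rD D2b in auto)
    also have "\<dots> = mp B id"
    proof (rule mp_cong)
      show "{z \<in> D2. r z \<in> A} = B"
      proof (intro equalityI subsetI)
        fix z assume z: "z \<in> {z \<in> D2. r z \<in> A}"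
        then have "s (r z) = z" using rs by auto
        then have "z = f (r z)" using sA z by auto
        then show "z \<in> B" using p1[of "r z"] z by simp
      next
        fix z assume "z \<in> B"
        then show "z \<in> {z \<in> D2. r z \<in> A}" using BD rB p3 by auto
      qed
    qed (use rs in auto)
    finally show ?thesis using e1 by simp
  qed
  show ?thesis unfolding mequiv_def using inA inB inU inV UV VU UPV by blast
qed

lemma bnd_wf: "bnd n A \<Longrightarrow> A \<subseteq> UNIV \<times> pts n" by (auto simp: bnd_def)

lemma bnd_blocks: "bnd n A \<Longrightarrow> \<exists>K. fst ` A \<subseteq> {..<K}"
proof -
  assume "bnd n A"
  then obtain K where "A \<subseteq> {..<K} \<times> pts n" by (auto simp: bnd_def)
  then have "fst ` A \<subseteq> {..<K}" by auto
  then show ?thesis by blast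
qed

lemma mvn_refl: "dgood n C \<Longrightarrow> bnd n C \<Longrightarrow> mvn n C C"
  unfolding mvn_def using good_id[of n C] by (auto intro: bij_betw_id[unfolded id_def] simp: id_def)

lemma mvn_trans:
  assumes "mvn n A B" "mvn n B C" shows "mvn n A C"
proof -
  obtain f where f: "bij_betw f A B" "good n A f" using assms(1) by (auto simp: mvn_def)
  obtain g where g: "bij_betw g B C" "good n B g" using assms(2) by (auto simp: mvn_def)
  have "bnd n B" using assms(1) by (simp add: mvn_def)
  then obtain K where K: "fst ` B \<subseteq> {..<K}" using bnd_blocks by blast
  have "good n A (g \<circ> f)"
  proof (rule good_comp[OF g(2) f(2)])
    show "wf n B g" using assms g(1) by (auto simp: wf_def mvn_def bnd_def bij_betw_def)
    show "wf n A f" using assms f(1) by (auto simp: wf_def mvn_def bnd_def bij_betw_def)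
    show "f ` A \<subseteq> B" using f(1) by (auto simp: bij_betw_def)
    show "fst ` f ` A \<subseteq> {..<K}" using f(1) K by (auto simp: bij_betw_def)
  qed
  moreover have "bij_betw (g \<circ> f) A C" using f(1) g(1) by (rule bij_betw_trans)
  moreover have "bnd n A" "bnd n C" using assms by (auto simp: mvn_def)
  ultimately show ?thesis unfolding mvn_def by blast
qed

lemma mvn_sym:
  assumes "mvn n A B" shows "mvn n B A"
proof -
  obtain f where f: "bij_betw f A B" "good n A f" using assms(1) by (auto simp: mvn_def)
  have "good n B (inv_into A f)" using good_inv[of f A n] f by (auto simp: bij_betw_def)
  then show ?thesis using assms f bij_betw_inv_into by (auto simp: mvn_def)
qed

lemma bnd_union: "bnd n A \<Longrightarrow> bnd n B \<Longrightarrow> bnd n (A \<union> B)"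
proof -
  assume "bnd n A" "bnd n B"
  then obtain K1 K2 where "A \<subseteq> {..<K1} \<times> pts n" "B \<subseteq> {..<K2} \<times> pts n" by (auto simp: bnd_def)
  then have "A \<union> B \<subseteq> {..<max K1 K2} \<times> pts n" by auto
  then show ?thesis by (auto simp: bnd_def)
qed

lemma mvn_union:
  assumes "mvn n A1 B1" "mvn n A2 B2" "A1 \<inter> A2 = {}" "B1 \<inter> B2 = {}"
  shows "mvn n (A1 \<union> A2) (B1 \<union> B2)"
proof -
  obtain f where f: "bij_betw f A1 B1" "good n A1 f" using assms(1) by (auto simp: mvn_def)
  obtain g where g: "bij_betw g A2 B2" "good n A2 g" using assms(2) by (auto simp: mvn_def)
  define h where "h z = (if z \<in> A1 then f z else g z)" for z
  have "bij_betw h A1 B1 = bij_betw f A1 B1" by (rule bij_betw_cong) (simp add: h_def)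
  then have h1: "bij_betw h A1 B1" using f(1) by simp
  have "bij_betw h A2 B2 = bij_betw g A2 B2" by (rule bij_betw_cong) (use assms(3) in \<open>auto simp: h_def\<close>)
  then have h2: "bij_betw h A2 B2" using g(1) by simp
  have "bij_betw h (A1 \<union> A2) (B1 \<union> B2)" by (rule bij_betw_combine[OF h1 h2 assms(4)])
  moreover have "good n (A1 \<union> A2) h"
  proof (rule good_union[OF _ _ assms(3)])
    show "good n A1 h" using f(2) by (rule good_cong[THEN iffD1, rotated 2]) (auto simp: h_def)
    have "good n A2 h = good n A2 g" by (rule good_cong) (use assms(3) in \<open>auto simp: h_def\<close>)
    then show "good n A2 h" using g(2) by simp
  qed
  ultimately show ?thesis using assms by (auto simp: mvn_def intro: bnd_union)
qed

lemma mvn_blockmap: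
  assumes "dgood n C" "bnd n C" "inj_on \<rho> (fst ` C)"
  shows "mvn n C ((\<lambda>z. (\<rho> (fst z), snd z)) ` C)"
proof -
  obtain K where K: "C \<subseteq> {..<K} \<times> pts n" using assms(2) by (auto simp: bnd_def)
  have "finite (\<rho> ` {..<K})" by simp
  then obtain K' where K': "\<rho> ` {..<K} \<subseteq> {..<K'}" using finite_nat_bounded by blast
  have "(\<lambda>z. (\<rho> (fst z), snd z)) ` C \<subseteq> {..<K'} \<times> pts n" using K K' by force
  then have b: "bnd n ((\<lambda>z. (\<rho> (fst z), snd z)) ` C)" by (auto simp: bnd_def)
  have "inj_on (\<lambda>z. (\<rho> (fst z), snd z)) C"
    using assms(3) unfolding inj_on_def by (metis imageI prod.collapse prod.inject)
  then show ?thesis using assms b good_blockmap[OF assms(1)] by (auto simp: mvn_def bij_betw_def)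
qed

lemma dgood_times: "pk S id \<in> polyalg n \<Longrightarrow> dgood n (J \<times> S)"
  unfolding dgood_def
proof
  fix j assume a: "pk S id \<in> polyalg n"
  show "pk {y. (j, y) \<in> J \<times> S} id \<in> polyalg n"
  proof (cases "j \<in> J")
    case True then show ?thesis using a by simp
  next
    case False then have "{y. (j, y) \<in> J \<times> S} = {}" by auto
    then show ?thesis by (metis pk_empty kzero_polyalg)
  qed
qed

lemma dgood_union: "dgood n A \<Longrightarrow> dgood n B \<Longrightarrow> A \<inter> B = {} \<Longrightarrow> dgood n (A \<union> B)"
  unfolding dgood_def
proof
  fix j assume a: "\<forall>j. pk {y. (j, y) \<in> A} id \<in> polyalg n" "\<forall>j. pk {y. (j, y) \<in> B} id \<in> polyalg n" "A \<inter> B = {}"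
  have "{y. (j, y) \<in> A \<union> B} = {y. (j, y) \<in> A} \<union> {y. (j, y) \<in> B}" by auto
  moreover have "pk ({y. (j, y) \<in> A} \<union> {y. (j, y) \<in> B}) id \<in> polyalg n"
    by (rule pk_union_polyalg) (use a in auto)
  ultimately show "pk {y. (j, y) \<in> A \<union> B} id \<in> polyalg n" by (simp only:)
qed

lemma bnd_times: "J \<subseteq> {..<K} \<Longrightarrow> S \<subseteq> pts n \<Longrightarrow> bnd n (J \<times> S)"
  unfolding bnd_def by blast

lemma bnd_shb: "bnd n A \<Longrightarrow> bnd n (shb k ` A)"
proof -
  assume "bnd n A"
  then obtain K where "A \<subseteq> {..<K} \<times> pts n" by (auto simp: bnd_def)
  then have "shb k ` A \<subseteq> {..<K+k} \<times> pts n" by (auto simp: shb_def)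
  then show ?thesis by (auto simp: bnd_def)
qed

lemma mvn_shb: "dgood n A \<Longrightarrow> bnd n A \<Longrightarrow> mvn n A (shb k ` A)"
  using mvn_blockmap[of n A "\<lambda>j. j + k"] by (simp add: shb_eq inj_on_def)

lemma mvn_shift:
  assumes "mvn n A B" "dgood n A" "dgood n B"
  shows "mvn n (shb k ` A) (shb k ` B)"
proof -
  have bA: "bnd n A" and bB: "bnd n B" using assms(1) by (auto simp: mvn_def)
  have "mvn n (shb k ` A) A" using mvn_sym[OF mvn_shb[OF assms(2) bA]] .
  moreover have "mvn n B (shb k ` B)" using mvn_shb[OF assms(3) bB] .
  ultimately show ?thesis using assms(1) mvn_trans by blast
qed

definition zs :: "nat \<Rightarrow> nat set \<Rightarrow> nat list set" where
  "zs n Z = {y \<in> pts n. \<forall>k\<in>Z. y ! k = 0}"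

definition fw :: "nat \<Rightarrow> nat set \<Rightarrow> nat list set" where
  "fw n W = zs n ({..<n} - W)"

lemma fw_iff: "y \<in> fw n W \<longleftrightarrow> length y = n \<and> (\<forall>k<n. k \<notin> W \<longrightarrow> y ! k = 0)"
  by (auto simp: fw_def zs_def pts_def)

lemma fw_pts: "fw n W \<subseteq> pts n" by (auto simp: fw_iff pts_def)

lemma kshift_pk: "kshift n i = pk (pts n) (\<lambda>y. y[i := Suc (y ! i)])"
  unfolding kshift_def pk_def by (intro ext) auto

lemma pk_restrict:
  assumes "pk (pts n) f \<in> polyalg n" "f ` pts n \<subseteq> pts n" "E \<subseteq> pts n" "pk E id \<in> polyalg n"
  shows "pk E f \<in> polyalg n"
proof -
  have "kmult n (pk (pts n) f) (pk E id) = pk {y \<in> E. id y \<in> pts n} (f \<circ> id)"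
    by (rule kmult_pk) (use assms in auto)
  also have "\<dots> = pk E f" by (rule pk_cong) (use assms in auto)
  finally show ?thesis using polyalg.pa_mult[OF assms(1,4)] by simp
qed

lemma zero_coord:
  assumes i: "i < n"
  shows "pk {y \<in> pts n. y ! i = 0} id \<in> polyalg n"
proof -
  define shf where "shf y = y[i := Suc (y ! i)]" for y :: "nat list"
  have ks: "kshift n i = pk (pts n) shf" by (simp add: kshift_pk shf_def[abs_def])
  have sp: "shf ` pts n \<subseteq> pts n" by (auto simp: shf_def pts_def)
  have inj: "inj_on shf (pts n)"
  proof (rule inj_onI)
    fix y z assume y: "y \<in> pts n" and z: "z \<in> pts n" and e: "shf y = shf z"
    show "y = z"
    proof (rule nth_equalityI)
      show "length y = length z" using y z by (simp add: pts_def)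
      fix k
      assume k: "k < length y"
      have "shf y ! k = shf z ! k" using e by simp
      then show "y ! k = z ! k" using y z i k
        by (cases "k = i") (simp_all add: shf_def pts_def)
    qed
  qed
  have adj: "pk (shf ` pts n) (inv_into (pts n) shf) \<in> polyalg n"
    using polyalg.pa_shift_adj[OF i] kadj_pk[OF inj] ks by simp
  have "kmult n (pk (pts n) shf) (pk (shf ` pts n) (inv_into (pts n) shf)) =
      pk {y \<in> shf ` pts n. inv_into (pts n) shf y \<in> pts n} (shf \<circ> inv_into (pts n) shf)"
    by (rule kmult_pk) (use sp in auto)
  also have "\<dots> = pk (shf ` pts n) id" by (rule pk_cong) (auto simp: inv_into_into f_inv_into_f)
  finally have pr: "pk (shf ` pts n) id \<in> polyalg n"
    using polyalg.pa_mult[OF polyalg.pa_shift[OF i] adj] ks by simp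
  have "pk (pts n - shf ` pts n) id \<in> polyalg n"
    by (rule pk_diff_polyalg[OF sp]) (use pr polyalg.pa_id[of n] kid_pk in auto)
  moreover have "pts n - shf ` pts n = {y \<in> pts n. y ! i = 0}"
  proof (intro equalityI subsetI)
    fix y assume "y \<in> pts n - shf ` pts n"
    then have y: "y \<in> pts n" "y \<notin> shf ` pts n" by auto
    show "y \<in> {y \<in> pts n. y ! i = 0}"
    proof (rule ccontr)
      assume "y \<notin> {y \<in> pts n. y ! i = 0}"
      then have "y ! i \<noteq> 0" using y by simp
      then have "shf (y[i := y ! i - 1]) = y" using y i by (simp add: shf_def pts_def)
      moreover have "y[i := y ! i - 1] \<in> pts n" using y by (simp add: pts_def)
      ultimately show False using y by (metis imageI)
    qed
  next
    fix y assume "y \<in> {y \<in> pts n. y ! i = 0}"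
    then have y: "y \<in> pts n" "y ! i = 0" by auto
    have "y \<notin> shf ` pts n"
    proof
      assume "y \<in> shf ` pts n"
      then obtain x where x: "x \<in> pts n" "y = shf x" by auto
      then have "y ! i = Suc (x ! i)" using i by (simp add: shf_def pts_def)
      then show False using y by simp
    qed
    then show "y \<in> pts n - shf ` pts n" using y by simp
  qed
  ultimately show ?thesis by simp
qed

lemma zs_polyalg: "Z \<subseteq> {..<n} \<Longrightarrow> pk (zs n Z) id \<in> polyalg n"
proof -
  assume Z: "Z \<subseteq> {..<n}"
  have "finite Z" using Z finite_subset by blast
  then show ?thesis using Z
  proof (induction Z rule: finite_induct)
    case empty
    have "zs n {} = pts n" by (simp add: zs_def)
    then show ?case using polyalg.pa_id[of n] kid_pk[of n] by metis
  next
    case (insert i Z)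
    have "kmult n (pk {y \<in> pts n. y ! i = 0} id) (pk (zs n Z) id) = pk {y \<in> zs n Z. id y \<in> {y \<in> pts n. y ! i = 0}} (id \<circ> id)"
      by (rule kmult_pk) (auto simp: zs_def)
    also have "\<dots> = pk (zs n (insert i Z)) id" by (rule pk_cong) (auto simp: zs_def)
    finally have eq: "kmult n (pk {y \<in> pts n. y ! i = 0} id) (pk (zs n Z) id) = pk (zs n (insert i Z)) id" .
    have i: "i < n" and Z: "Z \<subseteq> {..<n}" using insert.prems by auto
    have mem: "kmult n (pk {y \<in> pts n. y ! i = 0} id) (pk (zs n Z) id) \<in> polyalg n"
      by (rule polyalg.pa_mult[OF zero_coord[OF i] insert.IH[OF Z]])
    from mem show ?case unfolding eq .
  qed
qed

lemma fw_polyalg: "pk (fw n W) id \<in> polyalg n"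
  unfolding fw_def by (rule zs_polyalg) auto

lemma shiftpow:
  assumes c: "c < n"
  shows "pk (pts n) (\<lambda>y. y[c := y ! c + b]) \<in> polyalg n"
proof (induction b)
  case 0
  have "pk (pts n) (\<lambda>y. y[c := y ! c + 0]) = pk (pts n) id" by (rule pk_cong) auto
  then have "pk (pts n) (\<lambda>y. y[c := y ! c + 0]) = kid n" by (simp add: kid_pk)
  then show ?case using polyalg.pa_id by simp
next
  case (Suc b)
  have "kmult n (pk (pts n) (\<lambda>y. y[c := Suc (y ! c)])) (pk (pts n) (\<lambda>y. y[c := y ! c + b])) =
      pk {y \<in> pts n. y[c := y ! c + b] \<in> pts n} ((\<lambda>y. y[c := Suc (y ! c)]) \<circ> (\<lambda>y. y[c := y ! c + b]))"
    by (rule kmult_pk) (auto simp: pts_def)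
  also have "\<dots> = pk (pts n) (\<lambda>y. y[c := y ! c + Suc b])"
  proof (rule pk_cong)
    show "{y \<in> pts n. y[c := y ! c + b] \<in> pts n} = pts n" by (auto simp: pts_def)
    fix y assume "y \<in> {y \<in> pts n. y[c := y ! c + b] \<in> pts n}"
    then have "c < length y" using c by (simp add: pts_def)
    then show "((\<lambda>y. y[c := Suc (y ! c)]) \<circ> (\<lambda>y. y[c := y ! c + b])) y = y[c := y ! c + Suc b]" by simp
  qed
  finally have eq: "kmult n (pk (pts n) (\<lambda>y. y[c := Suc (y ! c)])) (pk (pts n) (\<lambda>y. y[c := y ! c + b])) = pk (pts n) (\<lambda>y. y[c := y ! c + Suc b])" .
  have mem: "kmult n (pk (pts n) (\<lambda>y. y[c := Suc (y ! c)])) (pk (pts n) (\<lambda>y. y[c := y ! c + b])) \<in> polyalg n"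
    using polyalg.pa_mult[OF polyalg.pa_shift[OF c] Suc.IH] unfolding kshift_pk .
  from mem show ?case unfolding eq .
qed

lemma shiftpow_fw:
  assumes c: "c < n"
  shows "pk (fw n W) (\<lambda>y. y[c := y ! c + b]) \<in> polyalg n"
  by (rule pk_restrict[OF shiftpow[OF c] _ fw_pts fw_polyalg]) (auto simp: pts_def)

lemma good_multi:
  assumes "\<And>j. j \<in> J \<Longrightarrow> pk S (h j) \<in> polyalg n"
  shows "good n (J \<times> S) (\<lambda>z. (i0, h (fst z) (snd z)))"
  unfolding good_def
proof (intro allI)
  fix i j
  show "mp (J \<times> S) (\<lambda>z. (i0, h (fst z) (snd z))) i j \<in> polyalg n"
  proof (cases "j \<in> J \<and> i0 = i")
    case True
    then have "mp (J \<times> S) (\<lambda>z. (i0, h (fst z) (snd z))) i j = pk S (h j)"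
      unfolding mp_def by (intro pk_cong) auto
    then show ?thesis using assms True by simp
  next
    case False
    then have "mp (J \<times> S) (\<lambda>z. (i0, h (fst z) (snd z))) i j = kzero"
      unfolding mp_def by (intro ext) (auto simp: pk_def kzero_def)
    then show ?thesis using kzero_polyalg by simp
  qed
qed

lemma shb_times: "shb a ` ({..<b} \<times> S) = {a..<a+b} \<times> S"
proof (intro equalityI subsetI)
  fix z assume "z \<in> shb a ` ({..<b} \<times> S)" then show "z \<in> {a..<a+b} \<times> S" by (auto simp: shb_def)
next
  fix z assume z: "z \<in> {a..<a+b} \<times> S"
  then have "z = shb a (fst z - a, snd z)" by (auto simp: shb_def)
  moreover have "(fst z - a, snd z) \<in> {..<b} \<times> S" using z by auto
  ultimately show "z \<in> shb a ` ({..<b} \<times> S)" by blast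
qed

lemma part1_mvn:
  assumes W'W: "W' \<subset> W" and Wn: "W \<subseteq> {..<n}" and a: "0 < a"
  shows "mvn n ({..<a} \<times> fw n W \<union> shb a ` ({..<b} \<times> fw n W')) ({..<a} \<times> fw n W)"
proof -
  obtain c where cW: "c \<in> W" and cW': "c \<notin> W'" using W'W by blast
  have cn: "c < n" using cW Wn by auto
  define V where "V = insert c W'"
  define F where "F = fw n W"
  define F' where "F' = fw n W'"
  define FV where "FV = fw n V"
  have VW: "V \<subseteq> W" using W'W cW by (auto simp: V_def)
  have FVF: "FV \<subseteq> F" using VW by (auto simp: FV_def F_def fw_iff subset_iff)
  have F'FV: "F' \<subseteq> FV" by (auto simp: FV_def F'_def fw_iff V_def)
  have F'c: "\<And>y. y \<in> F' \<Longrightarrow> y ! c = 0" using cW' cn by (auto simp: F'_def fw_iff)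
  have lenFV: "\<And>y. y \<in> FV \<Longrightarrow> length y = n" by (auto simp: FV_def fw_iff)
  have upd: "\<And>y v. y \<in> FV \<Longrightarrow> y[c := v] \<in> FV"
    using cn by (auto simp: FV_def fw_iff V_def nth_list_update)
  have upd0: "\<And>y. y \<in> FV \<Longrightarrow> y[c := 0] \<in> F'"
    using cn by (auto simp: FV_def F'_def fw_iff V_def nth_list_update)
  have pF: "pk F id \<in> polyalg n" "pk FV id \<in> polyalg n" "pk F' id \<in> polyalg n"
    unfolding F_def FV_def F'_def by (rule fw_polyalg)+
  have ptsF: "F \<subseteq> pts n" "FV \<subseteq> pts n" "F' \<subseteq> pts n" unfolding F_def FV_def F'_def by (rule fw_pts)+
  define X1 where "X1 = {0::nat} \<times> FV"
  define Y1 where "Y1 = {0::nat} \<times> {y \<in> FV. b \<le> y ! c}"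
  define X4 where "X4 = {a..<a+b} \<times> F'"
  define Y4 where "Y4 = {0::nat} \<times> {y \<in> FV. y ! c < b}"
  define X2 where "X2 = {0::nat} \<times> (F - FV) \<union> {1..<a} \<times> F"
  have m1: "mvn n X1 Y1"
    unfolding mvn_def
  proof (intro conjI exI)
    show "bnd n X1" unfolding X1_def by (rule bnd_times[of _ 1]) (use ptsF in auto)
    show "bnd n Y1" unfolding Y1_def by (rule bnd_times[of _ 1]) (use ptsF in auto)
    show "bij_betw (\<lambda>z. (0, (snd z)[c := snd z ! c + b])) X1 Y1"
    proof (rule bij_betw_byWitness[where f'="\<lambda>z. (0, (snd z)[c := snd z ! c - b])"])
      show "\<forall>z\<in>X1. (\<lambda>z. (0::nat, (snd z)[c := snd z ! c - b])) ((\<lambda>z. (0, (snd z)[c := snd z ! c + b])) z) = z"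
        using cn lenFV by (auto simp: X1_def)
      show "\<forall>z\<in>Y1. (\<lambda>z. (0::nat, (snd z)[c := snd z ! c + b])) ((\<lambda>z. (0, (snd z)[c := snd z ! c - b])) z) = z"
        using cn lenFV by (auto simp: Y1_def)
      show "(\<lambda>z. (0, (snd z)[c := snd z ! c + b])) ` X1 \<subseteq> Y1"
        using cn lenFV upd by (auto simp: X1_def Y1_def)
      show "(\<lambda>z. (0, (snd z)[c := snd z ! c - b])) ` Y1 \<subseteq> X1"
        using upd by (auto simp: X1_def Y1_def)
    qed
    show "good n X1 (\<lambda>z. (0, (snd z)[c := snd z ! c + b]))"
      unfolding X1_def using good_multi[of "{0}" FV "\<lambda>j y. y[c := y ! c + b]" n 0]
      shiftpow_fw[OF cn, of V b] by (simp add: FV_def)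
  qed
  have m4: "mvn n X4 Y4"
    unfolding mvn_def
  proof (intro conjI exI)
    show "bnd n X4" unfolding X4_def by (rule bnd_times[of _ "a+b"]) (use ptsF in auto)
    show "bnd n Y4" unfolding Y4_def by (rule bnd_times[of _ 1]) (use ptsF in auto)
    show "bij_betw (\<lambda>z. (0, (snd z)[c := fst z - a])) X4 Y4"
    proof (rule bij_betw_byWitness[where f'="\<lambda>z. (a + snd z ! c, (snd z)[c := 0])"])
      show "\<forall>z\<in>X4. (\<lambda>z. (a + snd z ! c, (snd z)[c := 0])) ((\<lambda>z. (0::nat, (snd z)[c := fst z - a])) z) = z"
      proof
        fix z assume z: "z \<in> X4"
        then have "snd z \<in> F'" "a \<le> fst z" "c < length (snd z)" using F'FV lenFV cn by (auto simp: X4_def)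
        then show "(\<lambda>z. (a + snd z ! c, (snd z)[c := 0])) ((\<lambda>z. (0::nat, (snd z)[c := fst z - a])) z) = z"
          using F'c[of "snd z"] list_update_id[of "snd z" c] by (simp add: prod_eq_iff)
      qed
      show "\<forall>z\<in>Y4. (\<lambda>z. (0::nat, (snd z)[c := fst z - a])) ((\<lambda>z. (a + snd z ! c, (snd z)[c := 0])) z) = z"
        using cn lenFV by (auto simp: Y4_def)
      show "(\<lambda>z. (0, (snd z)[c := fst z - a])) ` X4 \<subseteq> Y4"
      proof
        fix w assume "w \<in> (\<lambda>z. (0::nat, (snd z)[c := fst z - a])) ` X4"
        then obtain j y where jy: "a \<le> j" "j < a + b" "y \<in> F'" and w: "w = (0, y[c := j - a])"
          by (auto simp: X4_def)
        have "y \<in> FV" using jy F'FV by auto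
        then show "w \<in> Y4" using w jy upd[of y] lenFV[of y] cn by (auto simp: Y4_def)
      qed
      show "(\<lambda>z. (a + snd z ! c, (snd z)[c := 0])) ` Y4 \<subseteq> X4"
        using upd0 by (auto simp: X4_def Y4_def)
    qed
    show "good n X4 (\<lambda>z. (0, (snd z)[c := fst z - a]))"
      unfolding X4_def
    proof (rule good_multi)
      fix j
      have "pk F' (\<lambda>y. y[c := j - a]) = pk F' (\<lambda>y. y[c := y ! c + (j - a)])"
        by (rule pk_cong) (use F'c in auto)
      then show "pk F' (\<lambda>y. y[c := j - a]) \<in> polyalg n"
        using shiftpow_fw[OF cn, of W' "j - a"] by (simp add: F'_def)
    qed
  qed
  have Y14: "Y1 \<union> Y4 = X1" unfolding Y1_def Y4_def X1_def by auto
  have m14: "mvn n (X1 \<union> X4) X1"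
    using mvn_union[OF m1 m4] a Y14 by (force simp: X1_def X4_def Y1_def Y4_def)
  have m2: "mvn n X2 X2"
  proof (rule mvn_refl)
    show "dgood n X2" unfolding X2_def
      by (rule dgood_union) (use pk_diff_polyalg[OF FVF pF(1,2)] pF in \<open>auto intro: dgood_times\<close>)
    show "bnd n X2" unfolding X2_def
      by (rule bnd_union; rule bnd_times[of _ a]) (use ptsF a in auto)
  qed
  have m: "mvn n (X2 \<union> (X1 \<union> X4)) (X2 \<union> X1)"
    by (rule mvn_union[OF m2 m14]) (use a in \<open>auto simp: X1_def X2_def X4_def\<close>)
  have e1: "X2 \<union> (X1 \<union> X4) = {..<a} \<times> F \<union> shb a ` ({..<b} \<times> F')"
    unfolding shb_times X1_def X2_def X4_def using FVF a by auto
  have e2: "X2 \<union> X1 = {..<a} \<times> F"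
    unfolding X1_def X2_def using FVF a by auto
  show ?thesis using m e1 e2 by (simp add: F_def F'_def)
qed

lemma perm_pj:
  assumes p: "p permutes {..<n}" and j: "j \<le> n"
  shows "perm_k n p (pj n j) = pk (fw n (p ` {..<j})) id"
proof (intro ext)
  fix x y
  show "perm_k n p (pj n j) x y = pk (fw n (p ` {..<j})) id x y"
  proof (cases "x \<in> pts n \<and> y \<in> pts n")
    case False
    then show ?thesis using fw_pts by (auto simp: perm_k_def pk_def)
  next
    case True
    then have lx: "length x = n" and ly: "length y = n" by (auto simp: pts_def)
    define xs where "xs = map (\<lambda>k. x ! p k) [0..<n]"
    define ys where "ys = map (\<lambda>k. y ! p k) [0..<n]"
    have pin: "\<And>k. k < n \<Longrightarrow> p k < n" using permutes_in_image[OF p] by auto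
    have invn: "\<And>m. m < n \<Longrightarrow> inv p m < n" using permutes_in_image[OF permutes_inv[OF p]] by auto
    have pinv: "\<And>m. p (inv p m) = m" using permutes_inverses(1)[OF p] by auto
    have A: "xs = ys \<longleftrightarrow> x = y"
    proof
      assume e: "xs = ys"
      show "x = y"
      proof (rule nth_equalityI)
        show "length x = length y" using lx ly by simp
        fix m assume m: "m < length x"
        have "xs ! (inv p m) = ys ! (inv p m)" using e by simp
        then show "x ! m = y ! m" using invn[of m] m lx pinv[of m] by (simp add: xs_def ys_def)
      qed
    qed (simp add: xs_def ys_def)
    have B: "(\<forall>i. j \<le> i \<and> i < n \<longrightarrow> xs ! i = 0) \<longleftrightarrow> (\<forall>k<n. k \<notin> p ` {..<j} \<longrightarrow> x ! k = 0)"
    proof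
      assume h: "\<forall>i. j \<le> i \<and> i < n \<longrightarrow> xs ! i = 0"
      show "\<forall>k<n. k \<notin> p ` {..<j} \<longrightarrow> x ! k = 0"
      proof (intro allI impI)
        fix k assume k: "k < n" "k \<notin> p ` {..<j}"
        have "inv p k \<notin> {..<j}" using k(2) pinv[of k] by (metis imageI)
        then have "j \<le> inv p k" by simp
        then have "xs ! (inv p k) = 0" using h invn[OF k(1)] by simp
        then show "x ! k = 0" using invn[OF k(1)] pinv[of k] by (simp add: xs_def)
      qed
    next
      assume h: "\<forall>k<n. k \<notin> p ` {..<j} \<longrightarrow> x ! k = 0"
      show "\<forall>i. j \<le> i \<and> i < n \<longrightarrow> xs ! i = 0"
      proof (intro allI impI)
        fix i assume i: "j \<le> i \<and> i < n"
        have "p i \<notin> p ` {..<j}"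
          using i permutes_inj[OF p] by (auto simp: inj_eq)
        then have "x ! p i = 0" using h pin i by simp
        then show "xs ! i = 0" using i by (simp add: xs_def)
      qed
    qed
    have "perm_k n p (pj n j) x y = (if xs = ys \<and> (\<forall>i. j \<le> i \<and> i < n \<longrightarrow> xs ! i = 0) then 1 else 0)"
      using True by (simp add: perm_k_def pj_def xs_def ys_def pts_def)
    also have "\<dots> = pk (fw n (p ` {..<j})) id x y"
      using A B lx by (auto simp: pk_def fw_iff)
    finally show ?thesis .
  qed
qed

lemma mp_id_entry: "mp C id i k = (if i = k then pk {y. (k, y) \<in> C} id else kzero)"
  unfolding mp_def by (auto simp: pk_def kzero_def intro!: ext)

lemma perm_Pjl:
  assumes p: "p permutes {..<n}" and j: "j \<le> n"
  shows "perm_m n p (Pjl n j l) = mp ({..<l} \<times> fw n (p ` {..<j})) id"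
proof (rule ext, rule ext)
  fix i k
  have pz: "perm_k n p kzero = kzero" by (auto simp: perm_k_def kzero_def intro!: ext)
  show "perm_m n p (Pjl n j l) i k = mp ({..<l} \<times> fw n (p ` {..<j})) id i k"
    unfolding mp_id_entry perm_m_def Pjl_def
    using perm_pj[OF p j] pz by (cases "k < l") (auto simp: pk_def kzero_def intro!: ext)
qed

lemma Pjl_nn: "Pjl n n m = mp ({..<m} \<times> pts n) id"
proof (rule ext, rule ext)
  fix i k
  have "pj n n = pk (pts n) id" by (auto simp: pj_def pk_def intro!: ext)
  then show "Pjl n n m i k = mp ({..<m} \<times> pts n) id i k"
    unfolding mp_id_entry Pjl_def by (cases "k < m") (auto simp: pk_def kzero_def intro!: ext)
qed

lemma bsum_mp:
  assumes "A \<subseteq> {..<a} \<times> UNIV"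
  shows "bsum a (mp A id) (mp B id) = mp (A \<union> shb a ` B) id"
proof (rule ext, rule ext)
  fix i k
  show "bsum a (mp A id) (mp B id) i k = mp (A \<union> shb a ` B) id i k"
  proof (cases "i < a \<and> k < a")
    case True
    have "{y. (k, y) \<in> A \<union> shb a ` B} = {y. (k, y) \<in> A}" using True by (auto simp: shb_def)
    then show ?thesis using True by (simp add: bsum_def mp_id_entry)
  next
    case F1: False
    show ?thesis
    proof (cases "a \<le> i \<and> a \<le> k")
      case True
      have "{y. (k, y) \<in> A \<union> shb a ` B} = {y. (k - a, y) \<in> B}"
      proof (intro equalityI subsetI)
        fix y assume "y \<in> {y. (k, y) \<in> A \<union> shb a ` B}"
        then show "y \<in> {y. (k - a, y) \<in> B}" using True assms by (auto simp: shb_def)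
      next
        fix y assume "y \<in> {y. (k - a, y) \<in> B}"
        moreover have "(k, y) = shb a (k - a, y)" using True by (simp add: shb_def)
        ultimately show "y \<in> {y. (k, y) \<in> A \<union> shb a ` B}" by (metis (mono_tags) UnI2 imageI mem_Collect_eq)
      qed
      moreover have "(i - a = k - a) = (i = k)" using True by auto
      ultimately show ?thesis using True F1 by (simp add: bsum_def mp_id_entry)
    next
      case False
      then have "i \<noteq> k" using F1 by auto
      then show ?thesis using F1 False unfolding bsum_def mp_id_entry by auto
    qed
  qed
qed

fun gset :: "nat \<Rightarrow> (nat \<times> (nat \<Rightarrow> nat) \<times> nat) list \<Rightarrow> pt set" where
  "gset n [] = {}"
| "gset n ((j, p, l) # gs) = {..<l} \<times> fw n (p ` {..<j}) \<union> shb l ` gset n gs"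

lemma gset_bound: "gset n gs \<subseteq> {..<gsize gs} \<times> pts n"
proof (induction gs)
  case Nil then show ?case by simp
next
  case (Cons g gs)
  obtain j p l where g: "g = (j, p, l)" by (cases g)
  show ?case using Cons fw_pts by (force simp: g shb_def)
qed

lemma dgood_gset: "dgood n (gset n gs)"
proof (induction gs)
  case Nil then show ?case by (simp add: dgood_def kzero_polyalg)
next
  case (Cons g gs)
  obtain j p l where g: "g = (j, p, l)" by (cases g)
  show ?case unfolding g gset.simps
    by (rule dgood_union[OF dgood_times[OF fw_polyalg] dgood_shb[OF Cons.IH]]) (auto simp: shb_def)
qed

lemma gsum_eq: "(\<forall>(j, p, l) \<in> set gs. p permutes {..<n} \<and> j \<le> n) \<Longrightarrow> gsum n gs = mp (gset n gs) id"
proof (induction gs)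
  case Nil
  show ?case by (rule ext, rule ext) (simp only: gsum.simps gset.simps mp_id_entry, simp)
next
  case (Cons g gs)
  obtain j p l where g: "g = (j, p, l)" by (cases g)
  have pj: "p permutes {..<n}" "j \<le> n" using Cons.prems g by auto
  have "gsum n (g # gs) = bsum l (mp ({..<l} \<times> fw n (p ` {..<j})) id) (mp (gset n gs) id)"
    using Cons perm_Pjl[OF pj] by (simp add: g id_def)
  also have "\<dots> = mp (gset n (g # gs)) id" by (subst bsum_mp) (auto simp: g)
  finally show ?case .
qed

lemma fw_all: "fw n {..<n} = pts n" by (auto simp: fw_iff pts_def)

lemma dgood_I: "dgood n ({..<m} \<times> pts n)"
  by (rule dgood_times) (simp add: polyalg.pa_id kid_pk[symmetric])

lemma bnd_I: "bnd n ({..<m} \<times> pts n)" by (rule bnd_times[of _ m]) auto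

lemma shb_shb: "shb (l + g) ` X = shb l ` shb g ` X"
  unfolding image_image by (rule image_cong) (auto simp: shb_def)

lemma shb_disj: "A \<subseteq> {..<k} \<times> UNIV \<Longrightarrow> A \<inter> shb k ` B = {}"
  by (auto simp: shb_def)

lemma absorb:
  assumes m: "1 \<le> m"
  shows "(\<forall>(j, p, l) \<in> set gs. p ` {..<j} \<subset> {..<n}) \<Longrightarrow>
     mvn n (gset n gs \<union> shb (gsize gs) ` ({..<m} \<times> pts n)) ({..<m} \<times> pts n)"
proof (induction gs)
  case Nil
  have "shb 0 ` ({..<m} \<times> pts n) = {..<m} \<times> pts n" by (force simp: shb_def image_iff)
  then show ?case using mvn_refl[OF dgood_I bnd_I] by simp
next
  case (Cons gg gs)
  obtain j p l where gg: "gg = (j, p, l)" by (cases gg)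
  define I where "I = {..<m} \<times> pts n"
  define F where "F = fw n (p ` {..<j})"
  define G where "G = gset n gs"
  define g where "g = gsize gs"
  have Wsub: "p ` {..<j} \<subset> {..<n}" using Cons.prems gg by auto
  have IH: "mvn n (G \<union> shb g ` I) I" using Cons G_def g_def I_def by auto
  have dI: "dgood n I" and bI: "bnd n I" unfolding I_def by (rule dgood_I, rule bnd_I)
  have dF: "dgood n ({..<l} \<times> F)" unfolding F_def by (rule dgood_times[OF fw_polyalg])
  have bF: "bnd n ({..<l} \<times> F)" unfolding F_def by (rule bnd_times[OF _ fw_pts]) auto
  have GB: "G \<subseteq> {..<g} \<times> pts n" unfolding G_def g_def by (rule gset_bound)
  have dGI: "dgood n (G \<union> shb g ` I)"
    by (rule dgood_union[OF _ dgood_shb[OF dI]]) (simp add: G_def dgood_gset, rule shb_disj, use GB in blast)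
  have eq: "gset n (gg # gs) \<union> shb (gsize (gg # gs)) ` I = {..<l} \<times> F \<union> shb l ` (G \<union> shb g ` I)"
    by (simp add: gg F_def G_def g_def shb_shb image_Un Un_assoc)
  have s1: "mvn n (shb l ` (G \<union> shb g ` I)) (shb l ` I)"
    by (rule mvn_shift[OF IH dGI dI])
  have s2: "mvn n ({..<l} \<times> F \<union> shb l ` (G \<union> shb g ` I)) ({..<l} \<times> F \<union> shb l ` I)"
    by (rule mvn_union[OF mvn_refl[OF dF bF] s1]; rule shb_disj; blast)
  define \<rho> where "\<rho> j = (if j < l then j + m else j - l)" for j
  define C where "C = {..<l} \<times> F \<union> shb l ` I"
  have CI: "shb l ` I = {l..<l+m} \<times> pts n" unfolding I_def by (simp add: shb_times)
  have dC: "dgood n C" unfolding C_def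
    by (rule dgood_union[OF dF dgood_shb[OF dI]]; rule shb_disj; blast)
  have bC: "bnd n C" unfolding C_def by (rule bnd_union[OF bF bnd_shb[OF bI]])
  have injr: "inj_on \<rho> (fst ` C)"
  proof (rule inj_onI)
    fix x y assume x: "x \<in> fst ` C" and y: "y \<in> fst ` C" and e: "\<rho> x = \<rho> y"
    have "x < l + m" "y < l + m" using x y unfolding C_def CI by auto
    then show "x = y" using e by (auto simp: \<rho>_def split: if_splits)
  qed
  have imgC: "(\<lambda>z. (\<rho> (fst z), snd z)) ` C = I \<union> shb m ` ({..<l} \<times> F)"
  proof (intro equalityI subsetI)
    fix w assume "w \<in> (\<lambda>z. (\<rho> (fst z), snd z)) ` C"
    then obtain z where z: "z \<in> C" and w: "w = (\<rho> (fst z), snd z)" by auto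
    show "w \<in> I \<union> shb m ` ({..<l} \<times> F)"
      using z fw_pts unfolding w C_def CI shb_times I_def by (auto simp: \<rho>_def)
  next
    fix w assume w: "w \<in> I \<union> shb m ` ({..<l} \<times> F)"
    obtain a y where wa: "w = (a, y)" by fastforce
    have w': "(a < m \<and> y \<in> pts n) \<or> (m \<le> a \<and> a < m + l \<and> y \<in> F)"
      using w unfolding wa I_def shb_times by auto
    show "w \<in> (\<lambda>z. (\<rho> (fst z), snd z)) ` C"
    proof (cases "a < m")
      case True
      have "(a + l, y) \<in> C" using True w' unfolding C_def CI by auto
      moreover have "\<rho> (a + l) = a" by (simp add: \<rho>_def)
      then have "w = (\<lambda>z. (\<rho> (fst z), snd z)) (a + l, y)" unfolding wa by simp
      ultimately show ?thesis by (rule rev_image_eqI)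
    next
      case False
      have am: "m \<le> a" "a < m + l" using False w' by auto
      have inC: "(a - m, y) \<in> C" using False w' unfolding C_def CI by auto
      have "\<rho> (a - m) = a" using am by (simp add: \<rho>_def)
      then have "w = (\<lambda>z. (\<rho> (fst z), snd z)) (a - m, y)" unfolding wa by simp
      then show ?thesis using inC by (rule rev_image_eqI[rotated])
    qed
  qed
  have s3: "mvn n C (I \<union> shb m ` ({..<l} \<times> F))"
    using mvn_blockmap[OF dC bC injr] imgC by simp
  have s4: "mvn n (I \<union> shb m ` ({..<l} \<times> F)) I"
    using part1_mvn[OF Wsub order_refl, of m l] m unfolding fw_all I_def F_def by simp
  have fin: "mvn n ({..<l} \<times> F \<union> shb l ` (G \<union> shb g ` I)) I"
    using mvn_trans[OF s2 mvn_trans[OF s3[unfolded C_def] s4]] .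
  from fin show ?case unfolding I_def[symmetric] eq .
qed

lemma Omega_W:
  assumes "(j, p) \<in> Omega n"
  shows "p permutes {..<n}" "j \<le> n" "p ` {..<j} \<subseteq> {..<n}"
proof -
  have h: "j \<le> n \<and> shuffle n j p" using assms unfolding Omega_def by simp
  then show p: "p permutes {..<n}" unfolding shuffle_def by simp
  show j: "j \<le> n" using h by simp
  show "p ` {..<j} \<subseteq> {..<n}"
  proof
    fix x assume "x \<in> p ` {..<j}"
    then obtain i where i: "i < j" "x = p i" by auto
    have "i \<in> {..<n}" using i j by simp
    then have "p i \<in> {..<n}" using permutes_in_image[OF p, of i] by simp
    then show "x \<in> {..<n}" using i by simp
  qed
qed

lemma dgood_bsum: "dgood n ({..<l} \<times> fw n W \<union> shb l ` ({..<l'} \<times> fw n W'))"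
  by (rule dgood_union[OF dgood_times[OF fw_polyalg] dgood_shb[OF dgood_times[OF fw_polyalg]]])
     (rule shb_disj, blast)

theorem proposition3:
  fixes n :: nat
  assumes "n \<ge> 1"
  shows "(\<forall>l l' j j' p p'. 0 < l \<longrightarrow> 0 < l' \<longrightarrow> (j, p) \<in> Omega n \<longrightarrow> (j', p') \<in> Omega n \<longrightarrow>
            omega_prec (j', p') (j, p) \<longrightarrow>
            mequiv n (bsum l (perm_m n p (Pjl n j l)) (perm_m n p' (Pjl n j' l')))
                     (perm_m n p (Pjl n j l)))
       \<and> (\<forall>l l' j p. (j, p) \<in> Omega n \<longrightarrow>
            mequiv n (bsum l (perm_m n p (Pjl n j l)) (perm_m n p (Pjl n j l')))
                     (perm_m n p (Pjl n j (l + l'))))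
       \<and> (\<forall>gs m. (\<forall>(j, p, l) \<in> set gs. (j, p) \<in> Omega n \<and> j \<le> n - 1) \<longrightarrow> 1 \<le> m \<longrightarrow>
            mequiv n (bsum (gsize gs) (gsum n gs) (Pjl n n m)) (Pjl n n m))"
proof (intro conjI allI impI)
  fix l l' j j' :: nat and p p' :: "nat \<Rightarrow> nat"
  assume l: "0 < l" and l': "0 < l'" and O: "(j, p) \<in> Omega n" and O': "(j', p') \<in> Omega n"
    and pr: "omega_prec (j', p') (j, p)"
  note o = Omega_W[OF O] and o' = Omega_W[OF O']
  define F where "F = fw n (p ` {..<j})"
  define F' where "F' = fw n (p' ` {..<j'})"
  have e: "bsum l (perm_m n p (Pjl n j l)) (perm_m n p' (Pjl n j' l')) = mp ({..<l} \<times> F \<union> shb l ` ({..<l'} \<times> F')) id"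
    unfolding perm_Pjl[OF o(1,2)] perm_Pjl[OF o'(1,2)] F_def F'_def by (rule bsum_mp) auto
  have W: "p' ` {..<j'} \<subset> p ` {..<j}" using pr by (simp add: omega_prec_def)
  have m: "mvn n ({..<l} \<times> F \<union> shb l ` ({..<l'} \<times> F')) ({..<l} \<times> F)"
    unfolding F_def F'_def by (rule part1_mvn[OF W o(3) l])
  have e2: "perm_m n p (Pjl n j l) = mp ({..<l} \<times> F) id" unfolding F_def by (rule perm_Pjl[OF o(1,2)])
  have "mequiv n (mp ({..<l} \<times> F \<union> shb l ` ({..<l'} \<times> F')) id) (mp ({..<l} \<times> F) id)"
  proof (rule mequiv_of_mvn[OF m, of "l + l'"])
    show "dgood n ({..<l} \<times> F \<union> shb l ` ({..<l'} \<times> F'))" unfolding F_def F'_def by (rule dgood_bsum)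
    show "dgood n ({..<l} \<times> F)" unfolding F_def by (rule dgood_times[OF fw_polyalg])
    show "{..<l} \<times> F \<union> shb l ` ({..<l'} \<times> F') \<subseteq> {..<l + l'} \<times> pts n"
      using fw_pts unfolding F_def F'_def shb_times by auto
    show "{..<l} \<times> F \<subseteq> {..<l + l'} \<times> pts n" using fw_pts unfolding F_def by auto
  qed
  from this show "mequiv n (bsum l (perm_m n p (Pjl n j l)) (perm_m n p' (Pjl n j' l'))) (perm_m n p (Pjl n j l))"
    unfolding e[symmetric] e2[symmetric] .
next
  fix l l' j :: nat and p :: "nat \<Rightarrow> nat"
  assume O: "(j, p) \<in> Omega n"
  note o = Omega_W[OF O]
  define F where "F = fw n (p ` {..<j})"
  have "bsum l (perm_m n p (Pjl n j l)) (perm_m n p (Pjl n j l')) = mp ({..<l} \<times> F \<union> shb l ` ({..<l'} \<times> F)) id"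
    unfolding perm_Pjl[OF o(1,2)] F_def by (rule bsum_mp) auto
  also have "{..<l} \<times> F \<union> shb l ` ({..<l'} \<times> F) = {..<l + l'} \<times> F"
    unfolding shb_times by auto
  finally have e: "bsum l (perm_m n p (Pjl n j l)) (perm_m n p (Pjl n j l')) = mp ({..<l + l'} \<times> F) id" .
  have d: "dgood n ({..<l + l'} \<times> F)" unfolding F_def by (rule dgood_times[OF fw_polyalg])
  have b: "bnd n ({..<l + l'} \<times> F)" unfolding F_def by (rule bnd_times[OF _ fw_pts]) auto
  have e2: "perm_m n p (Pjl n j (l + l')) = mp ({..<l + l'} \<times> F) id" unfolding F_def by (rule perm_Pjl[OF o(1,2)])
  have "mequiv n (mp ({..<l + l'} \<times> F) id) (mp ({..<l + l'} \<times> F) id)"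
    by (rule mequiv_of_mvn[OF mvn_refl[OF d b] d d]) (use fw_pts in \<open>auto simp: F_def\<close>)
  from this show "mequiv n (bsum l (perm_m n p (Pjl n j l)) (perm_m n p (Pjl n j l'))) (perm_m n p (Pjl n j (l + l')))"
    unfolding e e2 .
next
  fix gs :: "(nat \<times> (nat \<Rightarrow> nat) \<times> nat) list" and m :: nat
  assume G: "\<forall>(j, p, l) \<in> set gs. (j, p) \<in> Omega n \<and> j \<le> n - 1" and m: "1 \<le> m"
  have G1: "\<forall>(j, p, l) \<in> set gs. p permutes {..<n} \<and> j \<le> n"
    using G by (auto dest: Omega_W)
  have G2: "\<forall>(j, p, l) \<in> set gs. p ` {..<j} \<subset> {..<n}"
  proof (intro ballI)
    fix x assume x: "x \<in> set gs"
    obtain j p l where xe: "x = (j, p, l)" by (cases x)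
    have O: "(j, p) \<in> Omega n" and j: "j \<le> n - 1" using G x xe by auto
    note o = Omega_W[OF O]
    have "card (p ` {..<j}) = j"
      using permutes_inj[OF o(1)] by (simp add: card_image inj_on_subset)
    then have "p ` {..<j} \<noteq> {..<n}" using j assms by auto
    then show "case x of (j, p, l) \<Rightarrow> p ` {..<j} \<subset> {..<n}" using o(3) xe by auto
  qed
  define I where "I = {..<m} \<times> pts n"
  have e: "bsum (gsize gs) (gsum n gs) (Pjl n n m) = mp (gset n gs \<union> shb (gsize gs) ` I) id"
    unfolding gsum_eq[OF G1] Pjl_nn I_def by (rule bsum_mp) (use gset_bound in blast)
  have mv: "mvn n (gset n gs \<union> shb (gsize gs) ` I) I"
    unfolding I_def by (rule absorb[OF m G2])
  have e2: "Pjl n n m = mp I id" unfolding I_def by (rule Pjl_nn)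
  have "mequiv n (mp (gset n gs \<union> shb (gsize gs) ` I) id) (mp I id)"
  proof (rule mequiv_of_mvn[OF mv, of "gsize gs + m"])
    show "dgood n (gset n gs \<union> shb (gsize gs) ` I)"
      unfolding I_def by (rule dgood_union[OF dgood_gset dgood_shb[OF dgood_I]])
        (use gset_bound in \<open>force simp: shb_def\<close>)
    show "dgood n I" unfolding I_def by (rule dgood_I)
    show "gset n gs \<union> shb (gsize gs) ` I \<subseteq> {..<gsize gs + m} \<times> pts n"
      using gset_bound[of n gs] unfolding I_def shb_times by auto
    show "I \<subseteq> {..<gsize gs + m} \<times> pts n" unfolding I_def by auto
  qed
  from this show "mequiv n (bsum (gsize gs) (gsum n gs) (Pjl n n m)) (Pjl n n m)"
    unfolding e[symmetric] e2[symmetric] .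
qed

end
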